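(* Let $k\ge 2$ and let $G$ be the complete $k$-partite graph $K(4,2,\ldots,2)$ (one part of size $4$ and $k-1$ parts of size $2$). Then $h(G)=k$ if $k$ is odd and $h(G)=k+1$ if $k$ is even.
   Context: All graphs are finite and simple. A list assignment $L$ to a graph $G$ assigns a finite set $L(v)$ to each vertex $v$; a proper $L$-coloring is a map $\psi$ with $\psi(v)\in L(v)$ for all $v$ and $\psi(u)\ne\psi(v)$ for every edge $uv$. For a subgraph $H$ of $G$ and a color $\sigma$, let $H_\sigma$ denote the subgraph of $H$ induced by $\{v\in V(H):\sigma\in L(v)\}$, and let $\alpha$ denote the independence number (with $\alpha$ of the null graph equal to $0$). $G$ and $L$ satisfy Hall's condition if $\sum_{\sigma}\alpha(H_\sigma)\ge |V(H)|$ for every subgraph $H$ of $G$, the sum being over all colors. The Hall number $h(G)$ is the smallest positive integer $k$ such that $G$ has a proper $L$-coloring whenever $G$ and $L$ satisfy Hall's condition and $|L(v)|\ge k$ for every $v\in V(G)$. *)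

theory Defs
  imports Main
begin

text \<open>A graph is given by a finite vertex set V and a symmetric irreflexive
  edge relation E (only edges between vertices of V matter).\<close>

definition independent_set :: "'v set \<Rightarrow> ('v \<Rightarrow> 'v \<Rightarrow> bool) \<Rightarrow> bool" where
  "independent_set S E \<longleftrightarrow> (\<forall>u\<in>S. \<forall>v\<in>S. \<not> E u v)"

text \<open>Independence number; equals 0 for the null graph (V empty).\<close>
definition indep_number :: "'v set \<Rightarrow> ('v \<Rightarrow> 'v \<Rightarrow> bool) \<Rightarrow> nat" where
  "indep_number V E = Max (card ` {S. S \<subseteq> V \<and> independent_set S E})"

definition is_subgraph ::
  "'v set \<Rightarrow> ('v \<Rightarrow> 'v \<Rightarrow> bool) \<Rightarrow> 'v set \<Rightarrow> ('v \<Rightarrow> 'v \<Rightarrow> bool) \<Rightarrow> bool" where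
  "is_subgraph W F V E \<longleftrightarrow> W \<subseteq> V \<and>
     (\<forall>u v. F u v \<longrightarrow> u \<in> W \<and> v \<in> W \<and> E u v) \<and> (\<forall>u v. F u v \<longrightarrow> F v u)"

text \<open>Colours not in any list of W
  contribute alpha(null graph) = 0, so the sum is taken over the colours
  occurring in lists of W.\<close>
definition hall_condition ::
  "'v set \<Rightarrow> ('v \<Rightarrow> 'v \<Rightarrow> bool) \<Rightarrow> ('v \<Rightarrow> 'c set) \<Rightarrow> bool" where
  "hall_condition V E L \<longleftrightarrow>
     (\<forall>W F. is_subgraph W F V E \<longrightarrow>
        card W \<le> (\<Sum>\<sigma>\<in>\<Union> (L ` W). indep_number {v\<in>W. \<sigma> \<in> L v} F))"

definition proper_L_coloring ::
  "'v set \<Rightarrow> ('v \<Rightarrow> 'v \<Rightarrow> bool) \<Rightarrow> ('v \<Rightarrow> 'c set) \<Rightarrow> ('v \<Rightarrow> 'c) \<Rightarrow> bool" where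
  "proper_L_coloring V E L \<psi> \<longleftrightarrow>
     (\<forall>v\<in>V. \<psi> v \<in> L v) \<and> (\<forall>u\<in>V. \<forall>v\<in>V. E u v \<longrightarrow> \<psi> u \<noteq> \<psi> v)"

text \<open>Colours are taken to be natural numbers (no loss of generality, as lists are finite).\<close>
definition hall_number :: "'v set \<Rightarrow> ('v \<Rightarrow> 'v \<Rightarrow> bool) \<Rightarrow> nat" where
  "hall_number V E = (LEAST k. 0 < k \<and>
     (\<forall>L :: 'v \<Rightarrow> nat set.
        (\<forall>v\<in>V. finite (L v) \<and> k \<le> card (L v)) \<and> hall_condition V E L
        \<longrightarrow> (\<exists>\<psi>. proper_L_coloring V E L \<psi>)))"

definition K422_V :: "nat \<Rightarrow> (nat \<times> nat) set" where
  "K422_V k = {(i, j). i < k \<and> j < (if i = 0 then 4 else 2)}"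

definition K422_E :: "nat \<times> nat \<Rightarrow> nat \<times> nat \<Rightarrow> bool" where
  "K422_E x y \<longleftrightarrow> fst x \<noteq> fst y"

end

theory Submission
  imports Defs
begin

lemma hall_marriage:
  assumes "finite I" "\<forall>i\<in>I. finite (X i)"
    "\<forall>J\<subseteq>I. card J \<le> card (\<Union> (X ` J))"
  shows "\<exists>f. inj_on f I \<and> (\<forall>i\<in>I. f i \<in> X i)"
  using assms
proof (induction "card I" arbitrary: I X rule: less_induct)
  case less
  show ?case
  proof (cases "I = {}")
    case True then show ?thesis by auto
  next
    case False
    show ?thesis
    proof (cases "\<forall>J. J \<noteq> {} \<and> J \<subset> I \<longrightarrow> card J < card (\<Union> (X ` J))")
      case True
      obtain i0 where i0: "i0 \<in> I" using False by auto
      have "card {i0} \<le> card (\<Union> (X ` {i0}))" using less.prems(3)[rule_format, of "{i0}"] i0 by blast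
      then have "X i0 \<noteq> {}" by auto
      then obtain x0 where x0: "x0 \<in> X i0" by auto
      define I' where "I' = I - {i0}"
      define X' where "X' = (\<lambda>i. X i - {x0})"
      have cI: "card I' < card I" unfolding I'_def using card_Diff1_less[OF less.prems(1) i0] .
      have fin': "\<forall>i\<in>I'. finite (X' i)" using less.prems(2) unfolding I'_def X'_def by auto
      have hall': "\<forall>J\<subseteq>I'. card J \<le> card (\<Union> (X' ` J))"
      proof (intro allI impI)
        fix J assume J: "J \<subseteq> I'"
        show "card J \<le> card (\<Union> (X' ` J))"
        proof (cases "J = {}")
          case True then show ?thesis by simp
        next
          case False
          have JI: "J \<subset> I" using J i0 unfolding I'_def by auto
          have finJ: "finite J" using JI less.prems(1) finite_subset by auto
          have fU: "finite (\<Union> (X ` J))" using finJ JI less.prems(2) by auto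
          have "card J < card (\<Union> (X ` J))" using True[rule_format, of J] False JI by blast
          moreover have "\<Union> (X' ` J) = \<Union> (X ` J) - {x0}" unfolding X'_def by auto
          moreover have "card (\<Union> (X ` J) - {x0}) \<ge> card (\<Union> (X ` J)) - 1"
            using fU by (simp add: card_Diff_singleton_if)
          ultimately show ?thesis by simp
        qed
      qed
      obtain f where f: "inj_on f I'" "\<forall>i\<in>I'. f i \<in> X' i"
        using less.hyps[OF cI _ fin' hall'] less.prems(1) unfolding I'_def by auto
      define g where "g = f(i0 := x0)"
      have "inj_on g I"
      proof -
        have "inj_on g I'" using f(1) unfolding g_def I'_def inj_on_def by auto
        moreover have "g i0 \<notin> g ` I'" using f(2) unfolding g_def I'_def X'_def by auto
        moreover have "I = insert i0 I'" using i0 unfolding I'_def by auto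
        ultimately show ?thesis by auto
      qed
      moreover have "\<forall>i\<in>I. g i \<in> X i" using f(2) x0 unfolding g_def I'_def X'_def by auto
      ultimately show ?thesis by blast
    next
      case False
      then obtain J where J: "J \<noteq> {}" "J \<subset> I" "\<not> card J < card (\<Union> (X ` J))" by auto
      have finJ: "finite J" using J less.prems(1) finite_subset by auto
      have eqJ: "card J = card (\<Union> (X ` J))" using J(3) less.prems(3)[rule_format, of J] J(2) by auto
      have cJ: "card J < card I" using J less.prems(1) psubset_card_mono by auto
      have p2: "\<forall>i\<in>J. finite (X i)" using J(2) less.prems(2) by auto
      have p3: "\<forall>Ja\<subseteq>J. card Ja \<le> card (\<Union> (X ` Ja))" using J(2) less.prems(3) by auto
      have "\<exists>f. inj_on f J \<and> (\<forall>i\<in>J. f i \<in> X i)"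
        using less.hyps[OF cJ finJ p2 p3] .
      then obtain f1 where f1: "inj_on f1 J" "\<forall>i\<in>J. f1 i \<in> X i" by auto
      define U where "U = \<Union> (X ` J)"
      define K where "K = I - J"
      define X2 where "X2 = (\<lambda>i. X i - U)"
      have fU: "finite U" unfolding U_def using finJ J less.prems(2) by auto
      have cK: "card K < card I"
      proof -
        have "card K = card I - card J" unfolding K_def
          using card_Diff_subset[OF finJ] J(2) by auto
        moreover have "card J > 0" using J(1) finJ by auto
        moreover have "card J \<le> card I" using J(2) less.prems(1) card_mono by auto
        ultimately show ?thesis by linarith
      qed
      have finK: "finite K" unfolding K_def using less.prems(1) by auto
      have fin2: "\<forall>i\<in>K. finite (X2 i)" unfolding K_def X2_def using less.prems(2) by auto
      have hall2: "\<forall>L\<subseteq>K. card L \<le> card (\<Union> (X2 ` L))"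
      proof (intro allI impI)
        fix L assume L: "L \<subseteq> K"
        have finL: "finite L" using L finK finite_subset by auto
        have LJ: "L \<inter> J = {}" using L unfolding K_def by auto
        have sub: "L \<union> J \<subseteq> I" using L J unfolding K_def by auto
        have h: "card (L \<union> J) \<le> card (\<Union> (X ` (L \<union> J)))" using less.prems(3)[rule_format, OF sub] .
        have e1: "card (L \<union> J) = card L + card J" using LJ finL finJ card_Un_disjoint by auto
        have e2: "\<Union> (X ` (L \<union> J)) = \<Union> (X2 ` L) \<union> U" unfolding X2_def U_def by auto
        have fin2L: "finite (\<Union> (X2 ` L))" using fin2 L finL by auto
        have e3: "card (\<Union> (X2 ` L) \<union> U) = card (\<Union> (X2 ` L)) + card U"
          using fin2L fU by (intro card_Un_disjoint) (auto simp: X2_def)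
        show "card L \<le> card (\<Union> (X2 ` L))" using h e1 e2 e3 eqJ unfolding U_def by simp
      qed
      obtain f2 where f2: "inj_on f2 K" "\<forall>i\<in>K. f2 i \<in> X2 i"
        using less.hyps[OF cK finK fin2 hall2] by auto
      define g where "g = (\<lambda>i. if i \<in> J then f1 i else f2 i)"
      have "inj_on g I"
      proof (rule inj_onI)
        fix a b assume ab: "a \<in> I" "b \<in> I" "g a = g b"
        show "a = b"
        proof (cases "a \<in> J"; cases "b \<in> J")
          assume "a \<in> J" "b \<in> J" then show ?thesis using ab f1(1) unfolding g_def inj_on_def by auto
        next
          assume a: "a \<in> J" "b \<notin> J"
          then have "g a \<in> U" using f1(2) unfolding g_def U_def by auto
          moreover have "b \<in> K" using a ab unfolding K_def by auto
          then have "g b \<notin> U" using a f2(2) unfolding g_def X2_def by auto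
          ultimately show ?thesis using ab by auto
        next
          assume a: "a \<notin> J" "b \<in> J"
          then have "g b \<in> U" using f1(2) unfolding g_def U_def by auto
          moreover have "a \<in> K" using a ab unfolding K_def by auto
          then have "g a \<notin> U" using a f2(2) unfolding g_def X2_def by auto
          ultimately show ?thesis using ab by auto
        next
          assume "a \<notin> J" "b \<notin> J" then show ?thesis using ab f2(1) unfolding g_def inj_on_def K_def by auto
        qed
      qed
      moreover have "\<forall>i\<in>I. g i \<in> X i" using f1(2) f2(2) unfolding g_def K_def X2_def by auto
      ultimately show ?thesis by blast
    qed
  qed
qed

definition colorable :: "'v set \<Rightarrow> ('v \<Rightarrow> nat) \<Rightarrow> ('v \<Rightarrow> 'c set) \<Rightarrow> bool" where
  "colorable V p L \<longleftrightarrow> (\<exists>\<psi>. (\<forall>v\<in>V. \<psi> v \<in> L v) \<and> (\<forall>u\<in>V. \<forall>v\<in>V. p u \<noteq> p v \<longrightarrow> \<psi> u \<noteq> \<psi> v))"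

lemma sdr_colorable:
  assumes "inj_on f V" "\<forall>v\<in>V. f v \<in> L v"
  shows "colorable V p L"
  unfolding colorable_def
proof (intro exI conjI)
  show "\<forall>v\<in>V. f v \<in> L v" using assms(2) .
  show "\<forall>u\<in>V. \<forall>v\<in>V. p u \<noteq> p v \<longrightarrow> f u \<noteq> f v"
    using assms(1) unfolding inj_on_def by blast
qed

lemma hall_sdr:
  assumes "finite V" "\<forall>v\<in>V. finite (L v)" "\<And>J. J \<subseteq> V \<Longrightarrow> card J \<le> card (\<Union> (L ` J))"
  shows "\<exists>f. inj_on f V \<and> (\<forall>v\<in>V. f v \<in> L v)"
  using hall_marriage[of V L] assms by blast

lemma card_Union_ge:
  assumes "finite J" "\<forall>v\<in>J. finite (L v)" "v \<in> J"
  shows "card (L v) \<le> card (\<Union> (L ` J))"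
  using assms by (intro card_mono) auto

lemma card_Union_ge2:
  assumes "finite J" "\<forall>v\<in>J. finite (L v)" "u \<in> J" "v \<in> J" "L u \<inter> L v = {}"
  shows "card (L u) + card (L v) \<le> card (\<Union> (L ` J))"
proof -
  have "card (L u) + card (L v) = card (L u \<union> L v)"
    using assms by (simp add: card_Un_disjoint)
  also have "\<dots> \<le> card (\<Union> (L ` J))" using assms by (intro card_mono) auto
  finally show ?thesis .
qed

lemma not_inj_on_pair:
  assumes "\<not> inj_on p J"
  shows "\<exists>u\<in>J. \<exists>v\<in>J. u \<noteq> v \<and> p u = p v"
  using assms unfolding inj_on_def by blast

lemma card_minus_singleton_ge: "finite A \<Longrightarrow> card A - 1 \<le> card (A - {c})"
  by (simp add: card_Diff_singleton_if)

lemma LA: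
  assumes "finite V" "\<forall>v\<in>V. finite (L v) \<and> s \<le> card (L v)"
    "(\<Sum>i\<in>p ` V. (card {v\<in>V. p v = i} + 1) div 2) \<le> s" "card V \<le> 2 * s"
  shows "colorable V p L"
  using assms
proof (induction "card V" arbitrary: V L s rule: less_induct)
  case less
  show ?case
  proof (cases "\<exists>u\<in>V. \<exists>v\<in>V. \<exists>c. u \<noteq> v \<and> p u = p v \<and> c \<in> L u \<and> c \<in> L v")
    case True
    then obtain u v c where uv: "u \<in> V" "v \<in> V" "u \<noteq> v" "p u = p v" "c \<in> L u" "c \<in> L v" by blast
    define V' where "V' = V - {u, v}"
    define L' where "L' = (\<lambda>w. L w - {c})"
    have cV: "card V' = card V - 2" unfolding V'_def using uv less.prems(1) by (simp add: card_Diff_subset)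
    have c2: "card V \<ge> 2"
    proof -
      have "{u, v} \<subseteq> V" using uv by auto
      then have "card {u, v} \<le> card V" using less.prems(1) card_mono by blast
      then show ?thesis using uv(3) by simp
    qed
    have s1: "s \<ge> 1" using c2 less.prems(4) by linarith
    have lt: "card V' < card V" using cV c2 by linarith
    have fin': "finite V'" unfolding V'_def using less.prems(1) by auto
    have lists': "\<forall>w\<in>V'. finite (L' w) \<and> s - 1 \<le> card (L' w)"
    proof
      fix w assume w: "w \<in> V'"
      then have "w \<in> V" unfolding V'_def by auto
      then have "finite (L w)" "s \<le> card (L w)" using less.prems(2) by auto
      then show "finite (L' w) \<and> s - 1 \<le> card (L' w)"
        unfolding L'_def using card_minus_singleton_ge[of "L w" c] by auto
    qed
    have cV': "card V' \<le> 2 * (s - 1)" using cV less.prems(4) by linarith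
    define f where "f = (\<lambda>i. (card {w\<in>V. p w = i} + 1) div 2)"
    define f' where "f' = (\<lambda>i. (card {w\<in>V'. p w = i} + 1) div 2)"
    define i0 where "i0 = p u"
    have fin_img: "finite (p ` V)" using less.prems(1) by auto
    have i0V: "i0 \<in> p ` V" unfolding i0_def using uv by auto
    have oth: "\<And>i. i \<noteq> i0 \<Longrightarrow> f' i = f i"
    proof -
      fix i assume "i \<noteq> i0"
      then have "{w\<in>V'. p w = i} = {w\<in>V. p w = i}" unfolding V'_def i0_def using uv(4) by auto
      then show "f' i = f i" unfolding f_def f'_def by simp
    qed
    have at0: "f' i0 + 1 = f i0"
    proof -
      have e: "{w\<in>V'. p w = i0} = {w\<in>V. p w = i0} - {u, v}" unfolding V'_def by auto
      have sub: "{u, v} \<subseteq> {w\<in>V. p w = i0}" using uv unfolding i0_def by auto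
      have fin0: "finite {w\<in>V. p w = i0}" using less.prems(1) by auto
      have "card {w\<in>V'. p w = i0} = card {w\<in>V. p w = i0} - 2"
        using e card_Diff_subset[OF _ sub] fin0 uv(3) by (simp add: finite_subset)
      moreover have "card {w\<in>V. p w = i0} \<ge> 2"
        using card_mono[OF fin0 sub] uv(3) by simp
      ultimately show ?thesis unfolding f_def f'_def by linarith
    qed
    have sum': "(\<Sum>i\<in>p ` V'. f' i) \<le> s - 1"
    proof -
      have "(\<Sum>i\<in>p ` V'. f' i) \<le> (\<Sum>i\<in>p ` V. f' i)"
        using fin_img unfolding V'_def by (intro sum_mono2) auto
      also have "\<dots> = f' i0 + (\<Sum>i\<in>p ` V - {i0}. f' i)"
        using fin_img i0V by (simp add: sum.remove)
      also have "(\<Sum>i\<in>p ` V - {i0}. f' i) = (\<Sum>i\<in>p ` V - {i0}. f i)"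
        using oth by (intro sum.cong) auto
      also have "f' i0 + (\<Sum>i\<in>p ` V - {i0}. f i) + 1 = (\<Sum>i\<in>p ` V. f i)"
        using at0 fin_img i0V by (simp add: sum.remove)
      finally show ?thesis using less.prems(3) unfolding f_def by linarith
    qed
    have "colorable V' p L'"
      using less.hyps[OF lt fin' lists' _ cV'] sum' unfolding f'_def by blast
    then obtain \<psi> where psi: "\<forall>w\<in>V'. \<psi> w \<in> L' w" "\<forall>a\<in>V'. \<forall>b\<in>V'. p a \<noteq> p b \<longrightarrow> \<psi> a \<noteq> \<psi> b"
      unfolding colorable_def by blast
    define \<phi> where "\<phi> = (\<lambda>w. if w = u \<or> w = v then c else \<psi> w)"
    show ?thesis unfolding colorable_def
    proof (intro exI conjI ballI impI)
      fix w assume "w \<in> V"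
      then show "\<phi> w \<in> L w" using psi(1) uv unfolding \<phi>_def L'_def V'_def by auto
    next
      fix a b assume ab: "a \<in> V" "b \<in> V" "p a \<noteq> p b"
      show "\<phi> a \<noteq> \<phi> b"
      proof (cases "a = u \<or> a = v")
        case True
        then have "b \<noteq> u \<and> b \<noteq> v" using ab uv(4) by auto
        then show ?thesis using True psi(1) ab unfolding \<phi>_def L'_def V'_def by auto
      next
        case False
        show ?thesis
        proof (cases "b = u \<or> b = v")
          case True then show ?thesis using False psi(1) ab unfolding \<phi>_def L'_def V'_def by auto
        next
          case F2: False
          then show ?thesis using False psi(2) ab unfolding \<phi>_def V'_def by auto
        qed
      qed
    qed
  next
    case nosh: False
    have "\<exists>f. inj_on f V \<and> (\<forall>v\<in>V. f v \<in> L v)"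
    proof (rule hall_sdr)
      show "finite V" using less.prems(1) .
      show "\<forall>v\<in>V. finite (L v)" using less.prems(2) by blast
      fix J assume J: "J \<subseteq> V"
      have finJ: "finite J" using J less.prems(1) finite_subset by blast
      have finL: "\<forall>v\<in>J. finite (L v)" using J less.prems(2) by blast
      show "card J \<le> card (\<Union> (L ` J))"
      proof (cases "inj_on p J")
        case False
        then obtain u v where uv: "u \<in> J" "v \<in> J" "u \<noteq> v" "p u = p v"
          using not_inj_on_pair by blast
        have "L u \<inter> L v = {}" using nosh uv J by blast
        then have "card (L u) + card (L v) \<le> card (\<Union> (L ` J))"
          using card_Union_ge2[OF finJ finL uv(1,2)] by blast
        moreover have "s \<le> card (L u)" "s \<le> card (L v)" using less.prems(2) uv J by auto
        moreover have "card J \<le> card V" using card_mono[OF less.prems(1) J] .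
        ultimately show ?thesis using less.prems(4) by linarith
      next
        case True
        show ?thesis
        proof (cases "J = {}")
          case True then show ?thesis by simp
        next
          case False
          then obtain v where v: "v \<in> J" by auto
          have "card J = card (p ` J)" using card_image[OF True] by simp
          also have "\<dots> \<le> card (p ` V)" using J less.prems(1) by (intro card_mono) auto
          also have "\<dots> = (\<Sum>i\<in>p ` V. 1)" by simp
          also have "\<dots> \<le> (\<Sum>i\<in>p ` V. (card {w\<in>V. p w = i} + 1) div 2)"
          proof (rule sum_mono)
            fix i assume "i \<in> p ` V"
            then obtain w where "w \<in> V" "p w = i" by auto
            then have "{w\<in>V. p w = i} \<noteq> {}" by auto
            moreover have "finite {w\<in>V. p w = i}" using less.prems(1) by auto
            ultimately have "card {w\<in>V. p w = i} \<ge> 1" by (simp add: Suc_leI card_gt_0_iff)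
            then show "1 \<le> (card {w\<in>V. p w = i} + 1) div 2" by linarith
          qed
          also have "\<dots> \<le> s" using less.prems(3) .
          also have "s \<le> card (L v)" using less.prems(2) v J by auto
          also have "\<dots> \<le> card (\<Union> (L ` J))" using card_Union_ge[OF finJ finL v] .
          finally show ?thesis .
        qed
      qed
    qed
    then obtain f where "inj_on f V" "\<forall>v\<in>V. f v \<in> L v" by blast
    then show ?thesis by (rule sdr_colorable)
  qed
qed

lemma comb_colorable:
  assumes "\<forall>v\<in>R. p v = 0" "R \<subseteq> V"
    "\<forall>v\<in>R. g v \<in> L v \<and> g v \<in> H"
    "inj_on f (V - R)" "\<forall>v\<in>V - R. f v \<in> L v \<and> f v \<notin> H"
  shows "colorable V p L"
  unfolding colorable_def
proof (intro exI conjI ballI impI)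
  define \<psi> where "\<psi> = (\<lambda>v. if v \<in> R then g v else f v)"
  fix v assume "v \<in> V"
  then show "(\<lambda>v. if v \<in> R then g v else f v) v \<in> L v" using assms(3,5) by auto
next
  fix u v assume uv: "u \<in> V" "v \<in> V" "p u \<noteq> p v"
  show "(\<lambda>v. if v \<in> R then g v else f v) u \<noteq> (\<lambda>v. if v \<in> R then g v else f v) v"
  proof (cases "u \<in> R")
    case True
    then have "v \<notin> R" using uv assms(1) by auto
    then show ?thesis using True assms(3,5) uv by auto
  next
    case False
    show ?thesis
    proof (cases "v \<in> R")
      case True
      have "f u \<notin> H" using False uv assms(5) by auto
      moreover have "g v \<in> H" using True assms(3) by auto
      ultimately show ?thesis using False True by auto
    next
      case F2: False
      have "u \<noteq> v" using uv by auto
      then show ?thesis using False F2 assms(4) uv unfolding inj_on_def by auto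
    qed
  qed
qed

locale DS =
  fixes V :: "'v set" and p :: "'v \<Rightarrow> nat" and L :: "'v \<Rightarrow> 'c set" and r :: nat
  assumes finV: "finite V"
  and A4: "card {v\<in>V. p v = 0} = 4"
  and P2: "\<forall>i\<in>p ` V - {0}. card {v\<in>V. p v = i} = 2"
  and rdef: "card (p ` V - {0}) = r"
  and lists: "\<forall>v\<in>V. finite (L v) \<and> r + 1 \<le> card (L v)"
  and disj: "\<forall>u\<in>V. \<forall>v\<in>V. u \<noteq> v \<longrightarrow> p u = p v \<longrightarrow> p u \<noteq> 0 \<longrightarrow> L u \<inter> L v = {}"
begin

definition Qp where "Qp = {v\<in>V. p v \<noteq> 0}"
definition Ap where "Ap = {v\<in>V. p v = 0}"
definition obs where "obs S \<longleftrightarrow> S \<subseteq> Qp \<and> inj_on p S \<and> card S = r \<and> card (\<Union> (L ` S)) = r + 1"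

lemma finL: "v \<in> V \<Longrightarrow> finite (L v)" using lists by auto
lemma cardL: "v \<in> V \<Longrightarrow> r + 1 \<le> card (L v)" using lists by auto

lemma finU: "S \<subseteq> V \<Longrightarrow> finite (\<Union> (L ` S))"
  using finV finL by (meson finite_UN_I finite_subset subsetD)

lemma finS: "S \<subseteq> V \<Longrightarrow> finite S" using finV finite_subset by auto

lemma QA: "V = Qp \<union> Ap" "Qp \<inter> Ap = {}" unfolding Qp_def Ap_def by auto

lemma cardA: "card Ap = 4" using A4 unfolding Ap_def .

lemma cardQ: "card Qp = 2 * r"
proof -
  have e: "Qp = (\<Union>i\<in>p ` V - {0}. {v\<in>V. p v = i})" unfolding Qp_def by auto
  have "card Qp = (\<Sum>i\<in>p ` V - {0}. card {v\<in>V. p v = i})"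
    unfolding e using finV by (intro card_UN_disjoint) auto
  also have "\<dots> = (\<Sum>i\<in>p ` V - {0}. 2)" using P2 by (intro sum.cong) auto
  also have "\<dots> = 2 * r" using rdef by simp
  finally show ?thesis .
qed

lemma cardV: "card V = 2 * r + 4"
proof -
  have "card V = card Qp + card Ap" using QA finV by (metis card_Un_disjoint finite_Un)
  then show ?thesis using cardQ cardA by simp
qed

lemma inj_boundQ:
  assumes "S \<subseteq> Qp" "inj_on p S"
  shows "card S \<le> r"
proof -
  have "card S = card (p ` S)" using card_image[OF assms(2)] by simp
  also have "\<dots> \<le> card (p ` V - {0})" using assms(1) finV unfolding Qp_def by (intro card_mono) auto
  finally show ?thesis using rdef by simp
qed

lemma Ap_ne: "Ap \<noteq> {}" using cardA by auto

lemma inj_boundV: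
  assumes "S \<subseteq> V" "inj_on p S"
  shows "card S \<le> r + 1"
proof -
  have "card S = card (p ` S)" using card_image[OF assms(2)] by simp
  also have "\<dots> \<le> card (p ` V)" using assms(1) finV by (intro card_mono) auto
  also have "p ` V = insert 0 (p ` V - {0})" using Ap_ne unfolding Ap_def by auto
  then have "card (p ` V) = r + 1" using rdef finV by (metis card_insert_disjoint finite_Diff finite_imageI insertCI insert_Diff_single Diff_iff Suc_eq_plus1 singletonI)
  finally show ?thesis .
qed

lemma pair_union:
  assumes "S \<subseteq> V" "u \<in> S" "v \<in> S" "u \<noteq> v" "p u = p v" "p u \<noteq> 0"
  shows "2 * r + 2 \<le> card (\<Union> (L ` S))"
proof -
  have "L u \<inter> L v = {}" using disj assms by blast
  then have "card (L u) + card (L v) \<le> card (\<Union> (L ` S))"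
    using card_Union_ge2[OF finS[OF assms(1)] _ assms(2,3)] finL assms(1) by blast
  moreover have "r + 1 \<le> card (L u)" "r + 1 \<le> card (L v)" using cardL assms by auto
  ultimately show ?thesis by linarith
qed

lemma exists_pair:
  assumes "r \<ge> 1"
  shows "\<exists>u\<in>Qp. \<exists>v\<in>Qp. u \<noteq> v \<and> p u = p v"
proof -
  have "p ` V - {0} \<noteq> {}" using rdef assms card.empty by (metis not_one_le_zero)
  then obtain i where i: "i \<in> p ` V - {0}" by blast
  then have "card {v\<in>V. p v = i} = 2" using P2 by auto
  then obtain u v where uv: "{v\<in>V. p v = i} = {u, v}" "u \<noteq> v" by (meson card_2_iff)
  have "u \<in> {v\<in>V. p v = i}" "v \<in> {v\<in>V. p v = i}" using uv(1) by auto
  then have "u \<in> Qp" "v \<in> Qp" "p u = p v" "u \<noteq> v" using i uv(2) unfolding Qp_def by auto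
  then show ?thesis by blast
qed

lemma big_union_Q:
  assumes "r \<ge> 1"
  shows "2 * r + 2 \<le> card (\<Union> (L ` Qp))"
proof -
  obtain u v where "u \<in> Qp" "v \<in> Qp" "u \<noteq> v" "p u = p v" using exists_pair[OF assms] by blast
  moreover have "Qp \<subseteq> V" unfolding Qp_def by auto
  moreover have "p u \<noteq> 0" using \<open>u \<in> Qp\<close> unfolding Qp_def by auto
  ultimately show ?thesis using pair_union by blast
qed

lemma obs_full:
  assumes "obs S" "r \<ge> 1"
  shows "p ` S = p ` V - {0}"
proof -
  have S: "S \<subseteq> Qp" "inj_on p S" "card S = r" using assms unfolding obs_def by auto
  have sub: "p ` S \<subseteq> p ` V - {0}" using S(1) unfolding Qp_def by auto
  have "card (p ` S) = r" using card_image[OF S(2)] S(3) by simp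
  then show ?thesis using card_seteq[OF _ sub] rdef finV by auto
qed

lemma obs_list:
  assumes "obs S" "v \<in> S"
  shows "L v = \<Union> (L ` S)"
proof -
  have S: "S \<subseteq> Qp" "card (\<Union> (L ` S)) = r + 1" using assms unfolding obs_def by auto
  have SV: "S \<subseteq> V" using S(1) unfolding Qp_def by auto
  have sub: "L v \<subseteq> \<Union> (L ` S)" using assms(2) by auto
  have "r + 1 \<le> card (L v)" using cardL SV assms(2) by auto
  then show ?thesis using card_seteq[OF finU[OF SV] sub] S(2) by auto
qed

lemma obs_dich:
  assumes "obs S1" "obs S2" "r \<ge> 1"
  shows "\<Union> (L ` S1) = \<Union> (L ` S2) \<or> \<Union> (L ` S1) \<inter> \<Union> (L ` S2) = {}"
proof -
  have "p ` V - {0} \<noteq> {}" using rdef assms(3) card.empty by (metis not_one_le_zero)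
  then obtain i where i: "i \<in> p ` V - {0}" by blast
  obtain u1 where u1: "u1 \<in> S1" "p u1 = i" using obs_full[OF assms(1,3)] i by (metis imageE)
  obtain u2 where u2: "u2 \<in> S2" "p u2 = i" using obs_full[OF assms(2,3)] i by (metis imageE)
  have e1: "L u1 = \<Union> (L ` S1)" using obs_list[OF assms(1) u1(1)] .
  have e2: "L u2 = \<Union> (L ` S2)" using obs_list[OF assms(2) u2(1)] .
  have V: "u1 \<in> V" "u2 \<in> V" using assms(1,2) u1 u2 unfolding obs_def Qp_def by auto
  show ?thesis
  proof (cases "u1 = u2")
    case True then show ?thesis using e1 e2 by auto
  next
    case False
    then have "L u1 \<inter> L u2 = {}" using disj V u1 u2 i by auto
    then show ?thesis using e1 e2 by auto
  qed
qed

end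

lemma card_diff_ge: "finite A \<Longrightarrow> card A - card (A \<inter> H) \<le> card (A - H)"
  by (metis card_Diff_subset_Int finite_Int le_refl)

context DS
begin

lemma GC1:
  assumes "card (H \<inter> \<Union> (L ` Qp)) \<le> 2" "\<forall>S. obs S \<longrightarrow> card (H \<inter> \<Union> (L ` S)) \<le> 1"
  shows "\<exists>f. inj_on f Qp \<and> (\<forall>v\<in>Qp. f v \<in> L v - H)"
proof (rule hall_sdr)
  have QV: "Qp \<subseteq> V" unfolding Qp_def by auto
  show "finite Qp" using finS[OF QV] .
  show "\<forall>v\<in>Qp. finite (L v - H)" using finL QV by auto
  fix J assume J: "J \<subseteq> Qp"
  have JV: "J \<subseteq> V" using J QV by auto
  have finJ: "finite J" using finS[OF JV] .
  have eU: "\<Union> ((\<lambda>v. L v - H) ` J) = \<Union> (L ` J) - H" by auto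
  define U where "U = card (\<Union> (L ` J))"
  define h where "h = card (\<Union> (L ` J) \<inter> H)"
  have fU: "finite (\<Union> (L ` J))" using finU[OF JV] .
  have dif: "U - h \<le> card (\<Union> (L ` J) - H)" unfolding U_def h_def using card_diff_ge[OF fU] .
  have h2: "h \<le> 2"
  proof -
    have "\<Union> (L ` J) \<inter> H \<subseteq> H \<inter> \<Union> (L ` Qp)" using J by auto
    moreover have "finite (H \<inter> \<Union> (L ` Qp))" using finU[OF QV] by auto
    ultimately show ?thesis unfolding h_def using assms(1) card_mono by (metis le_trans)
  qed
  show "card J \<le> card (\<Union> ((\<lambda>v. L v - H) ` J))"
  proof (cases "inj_on p J")
    case False
    then obtain u v where uv: "u \<in> J" "v \<in> J" "u \<noteq> v" "p u = p v" using not_inj_on_pair by blast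
    have "p u \<noteq> 0" using uv J unfolding Qp_def by auto
    then have "2 * r + 2 \<le> U" unfolding U_def using pair_union[OF JV uv] by blast
    moreover have "card J \<le> 2 * r" using card_mono[OF finS[OF QV] J] cardQ by simp
    ultimately have "card J \<le> U - h" using h2 by linarith
    then show ?thesis unfolding eU using dif by linarith
  next
    case True
    have cJ: "card J \<le> r" using inj_boundQ[OF J True] .
    show ?thesis
    proof (cases "J = {}")
      case True then show ?thesis by simp
    next
      case False
      then obtain v where v: "v \<in> J" by blast
      have "card (L v) \<le> U" unfolding U_def using card_Union_ge[OF finJ _ v] finL JV by blast
      then have U1: "r + 1 \<le> U" using cardL v JV by fastforce
      show ?thesis
      proof (rule ccontr)
        assume "\<not> ?thesis"
        then have lt: "U - h < card J" unfolding eU using dif by linarith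
        then have "h = 2" "card J = r" "U = r + 1" using U1 cJ h2 by linarith+
        then have "obs J" unfolding obs_def using J True U_def by auto
        then have "card (H \<inter> \<Union> (L ` J)) \<le> 1" using assms(2) by blast
        moreover have "H \<inter> \<Union> (L ` J) = \<Union> (L ` J) \<inter> H" by auto
        ultimately show False using \<open>h = 2\<close> unfolding h_def by simp
      qed
    qed
  qed
qed

lemma C1:
  assumes "finite H" "card H \<le> 2" "\<forall>a\<in>Ap. L a \<inter> H \<noteq> {}"
    "\<forall>S. obs S \<longrightarrow> card (H \<inter> \<Union> (L ` S)) \<le> 1"
  shows "colorable V p L"
proof -
  have "card (H \<inter> \<Union> (L ` Qp)) \<le> 2"
    using assms(1,2) by (meson card_mono inf_le1 le_trans)
  then obtain f where f: "inj_on f Qp" "\<forall>v\<in>Qp. f v \<in> L v - H" using GC1 assms(4) by blast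
  define g where "g = (\<lambda>a. SOME h. h \<in> L a \<inter> H)"
  have g: "\<forall>a\<in>Ap. g a \<in> L a \<and> g a \<in> H"
  proof
    fix a assume "a \<in> Ap"
    then have "L a \<inter> H \<noteq> {}" using assms(3) by blast
    then have "g a \<in> L a \<inter> H" unfolding g_def by (meson ex_in_conv someI_ex)
    then show "g a \<in> L a \<and> g a \<in> H" by blast
  qed
  have e: "V - Ap = Qp" unfolding Qp_def Ap_def by auto
  show ?thesis
    by (rule comb_colorable[of Ap p V g L H f]) (use f g e in \<open>auto simp: Ap_def\<close>)
qed

lemma whole:
  assumes "r \<ge> 1" "\<forall>u\<in>Ap. \<forall>v\<in>Ap. u \<noteq> v \<longrightarrow> L u \<inter> L v = {}"
  shows "colorable V p L"
proof -
  have "\<exists>f. inj_on f V \<and> (\<forall>v\<in>V. f v \<in> L v)"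
  proof (rule hall_sdr)
    show "finite V" using finV .
    show "\<forall>v\<in>V. finite (L v)" using finL by blast
    fix J assume J: "J \<subseteq> V"
    have finJ: "finite J" using finS[OF J] .
    have finLJ: "\<forall>v\<in>J. finite (L v)" using finL J by blast
    have cJ: "card J \<le> 2 * r + 4" using card_mono[OF finV J] cardV by simp
    have split: "card J = card (J \<inter> Qp) + card (J \<inter> Ap)"
    proof -
      have "J = (J \<inter> Qp) \<union> (J \<inter> Ap)" using J QA by auto
      moreover have "(J \<inter> Qp) \<inter> (J \<inter> Ap) = {}" using QA by auto
      ultimately show ?thesis using finJ by (metis card_Un_disjoint finite_Int)
    qed
    have cJQ: "card (J \<inter> Qp) \<le> 2 * r"
      using card_mono[OF finS[of Qp] ] cardQ by (metis Int_lower2 Qp_def mem_Collect_eq subsetI)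
    show "card J \<le> card (\<Union> (L ` J))"
    proof (cases "3 \<le> card (J \<inter> Ap)")
      case True
      have JA: "J \<inter> Ap \<subseteq> V" using J by auto
      have "card (\<Union> (L ` (J \<inter> Ap))) = (\<Sum>a\<in>J \<inter> Ap. card (L a))"
        using finS[OF JA] finL JA assms(2) by (intro card_UN_disjoint) auto
      also have "\<dots> \<ge> (\<Sum>a\<in>J \<inter> Ap. r + 1)" using cardL JA by (intro sum_mono) auto
      finally have "card (J \<inter> Ap) * (r + 1) \<le> card (\<Union> (L ` (J \<inter> Ap)))" by simp
      moreover have "card (\<Union> (L ` (J \<inter> Ap))) \<le> card (\<Union> (L ` J))"
        using finU[OF J] by (intro card_mono) auto
      moreover have "3 * (r + 1) \<le> card (J \<inter> Ap) * (r + 1)" using mult_le_mono1[OF True] .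
      ultimately have "3 * (r + 1) \<le> card (\<Union> (L ` J))" by (meson le_trans)
      moreover have "card J \<le> 3 * (r + 1)" using cJ assms(1) by simp
      ultimately show ?thesis by linarith
    next
      case F3: False
      show ?thesis
      proof (cases "inj_on p J")
        case False
        then obtain u v where uv: "u \<in> J" "v \<in> J" "u \<noteq> v" "p u = p v" using not_inj_on_pair by blast
        have "2 * r + 2 \<le> card (\<Union> (L ` J))"
        proof (cases "p u = 0")
          case False then show ?thesis using pair_union[OF J uv] by blast
        next
          case True
          then have "u \<in> Ap" "v \<in> Ap" using uv J unfolding Ap_def by auto
          then have "L u \<inter> L v = {}" using assms(2) uv by blast
          then have "card (L u) + card (L v) \<le> card (\<Union> (L ` J))"
            using card_Union_ge2[OF finJ finLJ uv(1,2)] by blast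
          moreover have "r + 1 \<le> card (L u)" "r + 1 \<le> card (L v)" using cardL uv J by auto
          ultimately show ?thesis by linarith
        qed
        then show ?thesis using split cJQ F3 by linarith
      next
        case True
        show ?thesis
        proof (cases "J = {}")
          case True then show ?thesis by simp
        next
          case False
          then obtain v where v: "v \<in> J" by blast
          have "card J \<le> r + 1" using inj_boundV[OF J True] .
          also have "\<dots> \<le> card (L v)" using cardL v J by auto
          also have "\<dots> \<le> card (\<Union> (L ` J))" using card_Union_ge[OF finJ finLJ v] .
          finally show ?thesis .
        qed
      qed
    qed
  qed
  then obtain f where "inj_on f V" "\<forall>v\<in>V. f v \<in> L v" by blast
  then show ?thesis by (rule sdr_colorable)
qed

end

lemma four_uv: "4 * u * v \<le> ((u::nat) + v) * (u + v)"
proof -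
  have "0 \<le> (int u - int v) * (int u - int v)" by simp
  then have "4 * int u * int v \<le> (int u + int v) * (int u + int v)" by (simp add: algebra_simps)
  then have "int (4 * u * v) \<le> int ((u + v) * (u + v))" by simp
  then show ?thesis by (simp only: of_nat_le_iff)
qed

lemma killcount:
  fixes Z Z' :: "'c set" and F :: "'a set" and M :: "'a \<Rightarrow> 'c set"
  assumes "finite Z" "finite Z'" "Z \<inter> Z' = {}" "card Z = s" "card Z' = s" "finite F" "card F \<le> 4"
    "\<forall>a\<in>F. M a \<subseteq> Z \<union> Z' \<and> s \<le> card (M a)" "odd s \<or> (\<exists>a\<in>F. s + 1 \<le> card (M a))"
  shows "\<exists>z\<in>Z. \<exists>z'\<in>Z'. \<forall>a\<in>F. z \<in> M a \<or> z' \<in> M a"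
proof -
  define B where "B = (\<Union>a\<in>F. (Z - M a) \<times> (Z' - M a))"
  define u where "u = (\<lambda>a. card (Z - M a))"
  define v where "v = (\<lambda>a. card (Z' - M a))"
  have cZZ: "card (Z \<union> Z') = 2 * s" using assms(1-5) by (simp add: card_Un_disjoint)
  have uv: "\<And>a. a \<in> F \<Longrightarrow> u a + v a + card (M a) = 2 * s"
  proof -
    fix a assume a: "a \<in> F"
    have sub: "M a \<subseteq> Z \<union> Z'" using a assms(8) by blast
    have fM: "finite (M a)" using sub assms(1,2) by (meson finite_UnI finite_subset)
    have e1: "(Z - M a) \<union> (Z' - M a) = (Z \<union> Z') - M a" by auto
    have d1: "(Z - M a) \<inter> (Z' - M a) = {}" using assms(3) by auto
    have "card (Z - M a) + card (Z' - M a) = card ((Z - M a) \<union> (Z' - M a))"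
      using d1 assms(1,2) by (simp add: card_Un_disjoint)
    also have "\<dots> = card ((Z \<union> Z') - M a)" using e1 by simp
    also have "\<dots> = card (Z \<union> Z') - card (M a)" using sub fM by (simp add: card_Diff_subset)
    finally have e: "u a + v a = 2 * s - card (M a)" unfolding u_def v_def using cZZ by simp
    have "card (M a) \<le> 2 * s" using card_mono[OF _ sub] assms(1,2) cZZ by simp
    then show "u a + v a + card (M a) = 2 * s" using e by simp
  qed
  have t1: "\<And>a. a \<in> F \<Longrightarrow> 4 * (u a * v a) \<le> s * s"
  proof -
    fix a assume a: "a \<in> F"
    have "s \<le> card (M a)" using assms(8) a by blast
    then have "u a + v a \<le> s" using uv[OF a] by linarith
    then have "(u a + v a) * (u a + v a) \<le> s * s" using mult_le_mono by blast
    then show "4 * (u a * v a) \<le> s * s" using four_uv[of "u a" "v a"] by (simp add: mult.assoc)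
  qed
  have finB: "finite B" unfolding B_def using assms(1,2,6) by auto
  have cB: "card B \<le> (\<Sum>a\<in>F. u a * v a)"
  proof -
    have "card B \<le> (\<Sum>a\<in>F. card ((Z - M a) \<times> (Z' - M a)))"
      unfolding B_def using assms(6) by (rule card_UN_le)
    also have "\<dots> = (\<Sum>a\<in>F. u a * v a)" unfolding u_def v_def by (simp add: card_cartesian_product)
    finally show ?thesis .
  qed
  define S where "S = (\<Sum>a\<in>F. u a * v a)"
  have sum4: "4 * S < 4 * (s * s)"
  proof (cases "odd s")
    case True
    have sp: "s * s > 0" using True by (cases s) auto
    have "\<And>a. a \<in> F \<Longrightarrow> 4 * (u a * v a) + 1 \<le> s * s"
    proof -
      fix a assume a: "a \<in> F"
      have "even (4 * (u a * v a))" by simp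
      moreover have "odd (s * s)" using True by simp
      ultimately have "4 * (u a * v a) \<noteq> s * s" by metis
      then show "4 * (u a * v a) + 1 \<le> s * s" using t1[OF a] by linarith
    qed
    then have "(\<Sum>a\<in>F. 4 * (u a * v a) + 1) \<le> (\<Sum>a\<in>F. s * s)" by (intro sum_mono) auto
    moreover have "(\<Sum>a\<in>F. 4 * (u a * v a) + 1) = (\<Sum>a\<in>F. 4 * (u a * v a)) + (\<Sum>a\<in>F. 1)"
      by (rule sum.distrib)
    moreover have "(\<Sum>a\<in>F. 4 * (u a * v a)) = 4 * S" unfolding S_def by (simp add: sum_distrib_left)
    ultimately have h1: "4 * S + card F \<le> card F * (s * s)" by simp
    have h2: "card F * (s * s) \<le> 4 * (s * s)" using assms(7) by simp
    show ?thesis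
    proof (cases "card F = 0")
      case True
      then have "F = {}" using assms(6) by simp
      then have "S = 0" unfolding S_def by simp
      then show ?thesis using sp by simp
    next
      case False
      then show ?thesis using h1 h2 by linarith
    qed
  next
    case False
    then obtain a0 where a0: "a0 \<in> F" "s + 1 \<le> card (M a0)" using assms(9) by blast
    have "u a0 + v a0 + 1 \<le> s" using uv[OF a0(1)] a0(2) by linarith
    then have le: "(u a0 + v a0 + 1) * (u a0 + v a0 + 1) \<le> s * s" using mult_le_mono by blast
    have x1: "4 * (u a0 * v a0) < s * s"
    proof -
      have "4 * (u a0 * v a0) \<le> (u a0 + v a0) * (u a0 + v a0)" using four_uv by (simp add: mult.assoc)
      also have "\<dots> < (u a0 + v a0 + 1) * (u a0 + v a0 + 1)" by simp
      finally show ?thesis using le by linarith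
    qed
    have x2: "(\<Sum>a\<in>F - {a0}. 4 * (u a * v a)) \<le> (\<Sum>a\<in>F - {a0}. s * s)"
      using t1 by (intro sum_mono) auto
    have x3: "(\<Sum>a\<in>F - {a0}. s * s) \<le> 3 * (s * s)"
    proof -
      have "card (F - {a0}) \<le> 3" using assms(7) a0(1) assms(6) by (simp add: card_Diff_singleton)
      then show ?thesis by simp
    qed
    have x4: "4 * S = 4 * (u a0 * v a0) + (\<Sum>a\<in>F - {a0}. 4 * (u a * v a))"
      unfolding S_def using a0(1) assms(6) by (simp add: sum.remove sum_distrib_left)
    show ?thesis using x1 x2 x3 x4 by linarith
  qed
  have "card B < s * s" using cB sum4 unfolding S_def by linarith
  moreover have "card (Z \<times> Z') = s * s" using assms(4,5) by (simp add: card_cartesian_product)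
  ultimately have "\<not> Z \<times> Z' \<subseteq> B"
    using card_mono[OF finB, of "Z \<times> Z'"] by linarith
  then obtain z z' where zz: "z \<in> Z" "z' \<in> Z'" "(z, z') \<notin> B" by auto
  show ?thesis
  proof (intro bexI ballI)
    fix a assume "a \<in> F"
    then show "z \<in> M a \<or> z' \<in> M a" using zz unfolding B_def by auto
  qed (use zz in auto)
qed

context DS
begin

lemma card_Diff1_ge: "finite X \<Longrightarrow> card X \<le> card (X - {c}) + 1"
proof (cases "c \<in> X")
  case True
  assume f: "finite X"
  then have "card X > 0" using True card_gt_0_iff by blast
  then show ?thesis using True f by (simp add: card_Diff_singleton)
next
  case False then show ?thesis by simp
qed

lemma MD:
  assumes A: "Ap = {ai, aj, al, at}" and d: "ai \<noteq> aj" "ai \<noteq> al" "ai \<noteq> at" "aj \<noteq> al" "aj \<noteq> at" "al \<noteq> at"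
    and c: "c \<in> L ai" "c \<in> L aj" "c \<notin> L al" "c \<notin> L at"
    and big: "r + 2 \<le> card (L al \<union> L at)"
    and big2: "2 * r + 2 \<le> card (\<Union> (L ` (V - {ai, aj})) - {c})"
  shows "colorable V p L"
proof -
  define T where "T = V - {ai, aj}"
  have inA: "ai \<in> Ap" "aj \<in> Ap" "al \<in> Ap" "at \<in> Ap" using A by auto
  have AV: "Ap \<subseteq> V" unfolding Ap_def by auto
  have TV: "T \<subseteq> V" unfolding T_def by auto
  have Teq: "T = Qp \<union> {al, at}" unfolding T_def using QA A d by auto
  have alQ: "al \<notin> Qp" "at \<notin> Qp" using inA QA by auto
  have cT: "card T = 2 * r + 2"
  proof -
    have "card T = card V - card {ai, aj}" unfolding T_def using inA AV finV
      by (intro card_Diff_subset) auto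
    then show ?thesis using cardV d by simp
  qed
  have "\<exists>f. inj_on f T \<and> (\<forall>v\<in>T. f v \<in> L v - {c})"
  proof (rule hall_sdr)
    show "finite T" using finS[OF TV] .
    show "\<forall>v\<in>T. finite (L v - {c})" using finL TV by auto
    fix J assume J: "J \<subseteq> T"
    have JV: "J \<subseteq> V" using J TV by auto
    have finJ: "finite J" using finS[OF JV] .
    have finLJ: "\<forall>v\<in>J. finite (L v)" using finL JV by blast
    have fU: "finite (\<Union> (L ` J))" using finU[OF JV] .
    have eU: "\<Union> ((\<lambda>v. L v - {c}) ` J) = \<Union> (L ` J) - {c}" by auto
    define JQ where "JQ = J \<inter> Qp"
    have JQsub: "JQ \<subseteq> Qp" unfolding JQ_def by auto
    have cJ: "card J \<le> card JQ + card (J \<inter> {al, at})"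
    proof -
      have "J \<subseteq> JQ \<union> (J \<inter> {al, at})" using J Teq unfolding JQ_def by auto
      then have "card J \<le> card (JQ \<union> (J \<inter> {al, at}))" using finJ unfolding JQ_def by (intro card_mono) auto
      also have "\<dots> \<le> card JQ + card (J \<inter> {al, at})" by (rule card_Un_le)
      finally show ?thesis .
    qed
    show "card J \<le> card (\<Union> ((\<lambda>v. L v - {c}) ` J))"
      unfolding eU
    proof (cases "inj_on p JQ")
      case False
      then obtain u v where uv: "u \<in> JQ" "v \<in> JQ" "u \<noteq> v" "p u = p v" using not_inj_on_pair by blast
      have "p u \<noteq> 0" using uv unfolding JQ_def Qp_def by auto
      moreover have "u \<in> J" "v \<in> J" using uv unfolding JQ_def by auto
      ultimately have "2 * r + 2 \<le> card (\<Union> (L ` J))" using pair_union[OF JV] uv by blast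
      then have g1: "2 * r + 1 \<le> card (\<Union> (L ` J) - {c})" using card_Diff1_ge[OF fU, of c] by linarith
      show "card J \<le> card (\<Union> (L ` J) - {c})"
      proof (cases "J = T")
        case True then show ?thesis using big2 cT unfolding T_def by simp
      next
        case False
        then have "J \<subset> T" using J by auto
        then have "card J < card T" using finS[OF TV] psubset_card_mono by blast
        then show ?thesis using g1 cT by linarith
      qed
    next
      case True
      have cQ: "card JQ \<le> r" using inj_boundQ[OF JQsub True] .
      show "card J \<le> card (\<Union> (L ` J) - {c})"
      proof (cases "al \<in> J")
        case alJ: True
        show ?thesis
        proof (cases "at \<in> J")
          case atJ: True
          have "card (J \<inter> {al, at}) \<le> card {al, at}" by (intro card_mono) auto
          moreover have "card {al, at} \<le> 2" by (simp add: card_insert_if)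
          ultimately have "card (J \<inter> {al, at}) \<le> 2" by linarith
          then have "card J \<le> r + 2" using cJ cQ by linarith
          also have "\<dots> \<le> card (L al \<union> L at)" using big .
          also have "\<dots> \<le> card (\<Union> (L ` J) - {c})"
            using alJ atJ c(3,4) fU by (intro card_mono) auto
          finally show ?thesis .
        next
          case atJ: False
          have "J \<inter> {al, at} = {al}" using alJ atJ by auto
          then have "card J \<le> r + 1" using cJ cQ by simp
          also have "\<dots> \<le> card (L al)" using cardL inA AV by auto
          also have "\<dots> \<le> card (\<Union> (L ` J) - {c})"
            using alJ c(3) fU by (intro card_mono) auto
          finally show ?thesis .
        qed
      next
        case alJ: False
        show ?thesis
        proof (cases "at \<in> J")
          case atJ: True
          have "J \<inter> {al, at} = {at}" using alJ atJ by auto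
          then have "card J \<le> r + 1" using cJ cQ by simp
          also have "\<dots> \<le> card (L at)" using cardL inA AV by auto
          also have "\<dots> \<le> card (\<Union> (L ` J) - {c})"
            using atJ c(4) fU by (intro card_mono) auto
          finally show ?thesis .
        next
          case atJ: False
          have "J \<inter> {al, at} = {}" using alJ atJ by auto
          then have cJ2: "card J \<le> r" using cJ cQ by simp
          show ?thesis
          proof (cases "J = {}")
            case True then show ?thesis by simp
          next
            case False
            then obtain v where v: "v \<in> J" by blast
            have "r + 1 \<le> card (L v)" using cardL v JV by auto
            moreover have "card (L v) \<le> card (L v - {c}) + 1" using card_Diff1_ge[of "L v" c] finLJ v by blast
            ultimately have "r \<le> card (L v - {c})" by linarith
            also have "\<dots> \<le> card (\<Union> (L ` J) - {c})" using v fU by (intro card_mono) auto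
            finally show ?thesis using cJ2 by linarith
          qed
        qed
      qed
    qed
  qed
  then obtain f where f: "inj_on f T" "\<forall>v\<in>T. f v \<in> L v - {c}" by blast
  show ?thesis
  proof (rule comb_colorable[of "{ai, aj}" p V "\<lambda>_. c" L "{c}" f])
    show "\<forall>v\<in>{ai, aj}. p v = 0" using inA unfolding Ap_def by auto
    show "{ai, aj} \<subseteq> V" using inA AV by auto
    show "\<forall>v\<in>{ai, aj}. c \<in> L v \<and> c \<in> {c}" using c by auto
    show "inj_on f (V - {ai, aj})" using f(1) unfolding T_def .
    show "\<forall>v\<in>V - {ai, aj}. f v \<in> L v \<and> f v \<notin> {c}" using f(2) unfolding T_def by auto
  qed
qed

lemma quad:
  assumes "\<forall>a\<in>Ap. c \<in> L a"
  shows "colorable V p L"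
proof (rule C1[of "{c}"])
  show "\<forall>S. obs S \<longrightarrow> card ({c} \<inter> \<Union> (L ` S)) \<le> 1"
  proof (intro allI impI)
    fix S
    have "card ({c} \<inter> \<Union> (L ` S)) \<le> card {c}" by (intro card_mono) auto
    then show "card ({c} \<inter> \<Union> (L ` S)) \<le> 1" by simp
  qed
qed (use assms in auto)

end

context DS
begin

lemma obs_sub: "obs S \<Longrightarrow> S \<subseteq> V" unfolding obs_def Qp_def by auto

lemma obs_card: "obs S \<Longrightarrow> card (\<Union> (L ` S)) = r + 1" unfolding obs_def by auto

lemma list_eq_obs:
  assumes "obs S" "a \<in> V" "L a \<subseteq> \<Union> (L ` S)"
  shows "L a = \<Union> (L ` S)"
  using card_seteq[OF finU[OF obs_sub[OF assms(1)]] assms(3)] obs_card[OF assms(1)] cardL[OF assms(2)]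
  by linarith

lemma card2_int_le1:
  assumes "c \<notin> Z \<or> h \<notin> Z"
  shows "card ({c, h} \<inter> Z) \<le> 1"
proof -
  have "{c, h} \<inter> Z \<subseteq> {c} \<or> {c, h} \<inter> Z \<subseteq> {h}" using assms by auto
  then show ?thesis
  proof
    assume "{c, h} \<inter> Z \<subseteq> {c}"
    then have "card ({c, h} \<inter> Z) \<le> card {c}" by (intro card_mono) auto
    then show ?thesis by simp
  next
    assume "{c, h} \<inter> Z \<subseteq> {h}"
    then have "card ({c, h} \<inter> Z) \<le> card {h}" by (intro card_mono) auto
    then show ?thesis by simp
  qed
qed

lemma triple:
  assumes r1: "r \<ge> 1" and c3: "card {a\<in>Ap. c \<in> L a} = 3"
  shows "colorable V p L"
proof -
  have AV: "Ap \<subseteq> V" unfolding Ap_def by auto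
  have finA: "finite Ap" using finS[OF AV] .
  have "{a\<in>Ap. c \<in> L a} \<noteq> Ap" using c3 cardA by auto
  then obtain at where at: "at \<in> Ap" "c \<notin> L at" by blast
  have others: "\<forall>a\<in>Ap. a \<noteq> at \<longrightarrow> c \<in> L a"
  proof (intro ballI impI, rule ccontr)
    fix a assume a: "a \<in> Ap" "a \<noteq> at" "c \<notin> L a"
    have "{a\<in>Ap. c \<in> L a} \<subseteq> Ap - {a, at}" using a at by auto
    then have "card {a\<in>Ap. c \<in> L a} \<le> card (Ap - {a, at})" using finA by (intro card_mono) auto
    also have "\<dots> = 2" using cardA a at by (simp add: card_Diff_subset)
    finally show False using c3 by simp
  qed
  have "\<exists>h\<in>L at. \<forall>S. obs S \<and> c \<in> \<Union> (L ` S) \<longrightarrow> h \<notin> \<Union> (L ` S)"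
  proof (cases "\<exists>S0. obs S0 \<and> c \<in> \<Union> (L ` S0)")
    case True
    then obtain S0 where S0: "obs S0" "c \<in> \<Union> (L ` S0)" by blast
    have "\<not> L at \<subseteq> \<Union> (L ` S0)"
    proof
      assume "L at \<subseteq> \<Union> (L ` S0)"
      then have "L at = \<Union> (L ` S0)" using list_eq_obs S0(1) at AV by blast
      then show False using S0(2) at(2) by simp
    qed
    then obtain h where h: "h \<in> L at" "h \<notin> \<Union> (L ` S0)" by blast
    show ?thesis
    proof (intro bexI[OF _ h(1)] allI impI)
      fix S assume S: "obs S \<and> c \<in> \<Union> (L ` S)"
      then have "\<Union> (L ` S) = \<Union> (L ` S0)" using obs_dich[OF _ S0(1) r1] S0(2) by blast
      then show "h \<notin> \<Union> (L ` S)" using h(2) by simp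
    qed
  next
    case False
    have "L at \<noteq> {}" using cardL[of at] at AV by auto
    then obtain h where "h \<in> L at" by blast
    then show ?thesis using False by blast
  qed
  then obtain h where h: "h \<in> L at" "\<forall>S. obs S \<and> c \<in> \<Union> (L ` S) \<longrightarrow> h \<notin> \<Union> (L ` S)" by blast
  show ?thesis
  proof (rule C1[of "{c, h}"])
    show "finite {c, h}" by simp
    show "card {c, h} \<le> 2" by (simp add: card_insert_if)
    show "\<forall>a\<in>Ap. L a \<inter> {c, h} \<noteq> {}"
    proof
      fix a assume a: "a \<in> Ap"
      show "L a \<inter> {c, h} \<noteq> {}"
      proof (cases "a = at")
        case True then show ?thesis using h(1) by blast
      next
        case False then have "c \<in> L a" using others a by blast
        then show ?thesis by blast
      qed
    qed
    show "\<forall>S. obs S \<longrightarrow> card ({c, h} \<inter> \<Union> (L ` S)) \<le> 1"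
    proof (intro allI impI)
      fix S assume S: "obs S"
      have "c \<notin> \<Union> (L ` S) \<or> h \<notin> \<Union> (L ` S)" using h(2) S by blast
      then show "card ({c, h} \<inter> \<Union> (L ` S)) \<le> 1" by (rule card2_int_le1)
    qed
  qed
qed

lemma notrip3:
  assumes "\<forall>c. card {a\<in>Ap. c \<in> L a} \<le> 2" "x \<in> Ap" "y \<in> Ap" "z \<in> Ap" "x \<noteq> y" "x \<noteq> z" "y \<noteq> z"
    "c \<in> L x" "c \<in> L y" "c \<in> L z"
  shows False
proof -
  have AV: "Ap \<subseteq> V" unfolding Ap_def by auto
  have "{x, y, z} \<subseteq> {a\<in>Ap. c \<in> L a}" using assms by auto
  then have "card {x, y, z} \<le> card {a\<in>Ap. c \<in> L a}" using finS[OF AV] by (intro card_mono) auto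
  moreover have "card {x, y, z} = 3" using assms(5-7) by simp
  moreover have "card {a\<in>Ap. c \<in> L a} \<le> 2" using assms(1) by blast
  ultimately show False by linarith
qed

end

context DS
begin

lemma MDiv:
  assumes r1: "r \<ge> 1" and A: "Ap = {ai, aj, al, at}"
    and d: "ai \<noteq> aj" "ai \<noteq> al" "ai \<noteq> at" "aj \<noteq> al" "aj \<noteq> at" "al \<noteq> at"
    and nt: "\<forall>c. card {a\<in>Ap. c \<in> L a} \<le> 2"
    and e1: "L ai \<inter> L aj \<noteq> {}" and e2: "L al \<inter> L at = {}"
  shows "colorable V p L"
proof -
  have inA: "ai \<in> Ap" "aj \<in> Ap" "al \<in> Ap" "at \<in> Ap" using A by auto
  have AV: "Ap \<subseteq> V" unfolding Ap_def by auto
  obtain c where c: "c \<in> L ai" "c \<in> L aj" using e1 by blast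
  have cl: "c \<notin> L al" using notrip3[OF nt inA(1,2,3) d(1,2,4) c] by blast
  have ct: "c \<notin> L at" using notrip3[OF nt inA(1,2,4) d(1,3,5) c] by blast
  have fl: "finite (L al)" "finite (L at)" using finL inA AV by auto
  have cu: "card (L al \<union> L at) = card (L al) + card (L at)" using e2 fl by (simp add: card_Un_disjoint)
  have "r + 1 \<le> card (L al)" "r + 1 \<le> card (L at)" using cardL inA AV by auto
  then have big: "2 * r + 2 \<le> card (L al \<union> L at)" using cu by linarith
  have sub: "L al \<union> L at \<subseteq> \<Union> (L ` (V - {ai, aj})) - {c}" using cl ct inA AV d by auto
  have fin2: "finite (\<Union> (L ` (V - {ai, aj})) - {c})" using finU[of "V - {ai, aj}"] by auto
  have big2: "2 * r + 2 \<le> card (\<Union> (L ` (V - {ai, aj})) - {c})"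
    using big card_mono[OF fin2 sub] by linarith
  show ?thesis using MD[OF A d c cl ct _ big2] big by linarith
qed

lemma PM:
  assumes r1: "r \<ge> 1" and A: "Ap = {ai, aj, al, at}"
    and d: "ai \<noteq> aj" "ai \<noteq> al" "ai \<noteq> at" "aj \<noteq> al" "aj \<noteq> at" "al \<noteq> at"
    and nt: "\<forall>c. card {a\<in>Ap. c \<in> L a} \<le> 2"
    and e1: "L ai \<inter> L aj \<noteq> {}" and e2: "L al \<inter> L at \<noteq> {}"
    and hyp: "even r \<or> (\<exists>a\<in>Ap. r + 2 \<le> card (L a))"
  shows "colorable V p L"
proof -
  have inA: "ai \<in> Ap" "aj \<in> Ap" "al \<in> Ap" "at \<in> Ap" using A by auto
  have AV: "Ap \<subseteq> V" unfolding Ap_def by auto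
  have noT1: "\<And>c. c \<in> L ai \<Longrightarrow> c \<in> L aj \<Longrightarrow> c \<notin> L al \<and> c \<notin> L at"
  proof -
    fix c assume c: "c \<in> L ai" "c \<in> L aj"
    show "c \<notin> L al \<and> c \<notin> L at"
      using notrip3[OF nt inA(1,2,3) d(1,2,4) c] notrip3[OF nt inA(1,2,4) d(1,3,5) c] by blast
  qed
  have d': "al \<noteq> ai" "at \<noteq> ai" "al \<noteq> aj" "at \<noteq> aj" using d by auto
  have noT2: "\<And>c. c \<in> L al \<Longrightarrow> c \<in> L at \<Longrightarrow> c \<notin> L ai \<and> c \<notin> L aj"
  proof -
    fix c assume c: "c \<in> L al" "c \<in> L at"
    show "c \<notin> L ai \<and> c \<notin> L aj"
      using notrip3[OF nt inA(3,4,1) d(6) d'(1) d'(2) c]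
        notrip3[OF nt inA(3,4,2) d(6) d'(3) d'(4) c] by blast
  qed
  show ?thesis
  proof (cases "\<exists>c d. c \<in> L ai \<and> c \<in> L aj \<and> d \<in> L al \<and> d \<in> L at \<and>
      (\<forall>S. obs S \<longrightarrow> card ({c, d} \<inter> \<Union> (L ` S)) \<le> 1)")
    case True
    then obtain c d where cd: "c \<in> L ai" "c \<in> L aj" "d \<in> L al" "d \<in> L at"
      "\<forall>S. obs S \<longrightarrow> card ({c, d} \<inter> \<Union> (L ` S)) \<le> 1" by blast
    show ?thesis
    proof (rule C1[of "{c, d}"])
      show "finite {c, d}" by simp
      show "card {c, d} \<le> 2" by (simp add: card_insert_if)
      show "\<forall>a\<in>Ap. L a \<inter> {c, d} \<noteq> {}"
      proof
        fix a assume "a \<in> Ap"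
        then have "a = ai \<or> a = aj \<or> a = al \<or> a = at" using A by auto
        then show "L a \<inter> {c, d} \<noteq> {}" using cd(1-4) by auto
      qed
      show "\<forall>S. obs S \<longrightarrow> card ({c, d} \<inter> \<Union> (L ` S)) \<le> 1" using cd(5) .
    qed
  next
    case False
    have bad: "\<And>c d. c \<in> L ai \<Longrightarrow> c \<in> L aj \<Longrightarrow> d \<in> L al \<Longrightarrow> d \<in> L at \<Longrightarrow>
        \<exists>S. obs S \<and> c \<in> \<Union> (L ` S) \<and> d \<in> \<Union> (L ` S)"
    proof -
      fix c d assume cd: "c \<in> L ai" "c \<in> L aj" "d \<in> L al" "d \<in> L at"
      then obtain S where S: "obs S" "\<not> card ({c, d} \<inter> \<Union> (L ` S)) \<le> 1" using False by blast
      have "\<not> (c \<notin> \<Union> (L ` S) \<or> d \<notin> \<Union> (L ` S))"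
      proof
        assume "c \<notin> \<Union> (L ` S) \<or> d \<notin> \<Union> (L ` S)"
        then have "card ({c, d} \<inter> \<Union> (L ` S)) \<le> 1" by (rule card2_int_le1)
        then show False using S(2) by blast
      qed
      then show "\<exists>S. obs S \<and> c \<in> \<Union> (L ` S) \<and> d \<in> \<Union> (L ` S)" using S(1) by blast
    qed
    obtain c0 where c0: "c0 \<in> L ai" "c0 \<in> L aj" using e1 by blast
    obtain d0 where d0: "d0 \<in> L al" "d0 \<in> L at" using e2 by blast
    obtain S0 where S0: "obs S0" "c0 \<in> \<Union> (L ` S0)" "d0 \<in> \<Union> (L ` S0)" using bad[OF c0 d0] by blast
    define Z where "Z = \<Union> (L ` S0)"
    have I1Z: "\<And>c. c \<in> L ai \<Longrightarrow> c \<in> L aj \<Longrightarrow> c \<in> Z"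
    proof -
      fix c assume c: "c \<in> L ai" "c \<in> L aj"
      obtain S where S: "obs S" "c \<in> \<Union> (L ` S)" "d0 \<in> \<Union> (L ` S)" using bad[OF c d0] by blast
      have "\<Union> (L ` S) = Z" using obs_dich[OF S(1) S0(1) r1] S(3) S0(3) unfolding Z_def by blast
      then show "c \<in> Z" using S(2) by simp
    qed
    have I2Z: "\<And>d. d \<in> L al \<Longrightarrow> d \<in> L at \<Longrightarrow> d \<in> Z"
    proof -
      fix d assume d: "d \<in> L al" "d \<in> L at"
      obtain S where S: "obs S" "c0 \<in> \<Union> (L ` S)" "d \<in> \<Union> (L ` S)" using bad[OF c0 d] by blast
      have "\<Union> (L ` S) = Z" using obs_dich[OF S(1) S0(1) r1] S(2) S0(2) unfolding Z_def by blast
      then show "d \<in> Z" using S(3) by simp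
    qed
    have bigl: "r + 2 \<le> card (L al \<union> L at)"
    proof (rule ccontr)
      assume "\<not> ?thesis"
      then have le: "card (L al \<union> L at) \<le> r + 1" by linarith
      have fl: "finite (L al \<union> L at)" using finL inA AV by auto
      have c1: "r + 1 \<le> card (L al)" "r + 1 \<le> card (L at)" using cardL inA AV by auto
      have "L al = L al \<union> L at"
        using card_seteq[OF fl Un_upper1] le c1 by linarith
      moreover have "L at = L al \<union> L at"
        using card_seteq[OF fl Un_upper2] le c1 by linarith
      ultimately have eq: "L al = L at" by simp
      have "L al \<subseteq> Z" using I2Z eq by blast
      then have "L al = Z" using list_eq_obs[OF S0(1)] inA AV unfolding Z_def by blast
      then have "c0 \<in> L al" using S0(2) unfolding Z_def by simp
      then show False using noT1[OF c0] by blast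
    qed
    have bigi: "r + 2 \<le> card (L ai \<union> L aj)"
    proof (rule ccontr)
      assume "\<not> ?thesis"
      then have le: "card (L ai \<union> L aj) \<le> r + 1" by linarith
      have fl: "finite (L ai \<union> L aj)" using finL inA AV by auto
      have c1: "r + 1 \<le> card (L ai)" "r + 1 \<le> card (L aj)" using cardL inA AV by auto
      have "L ai = L ai \<union> L aj"
        using card_seteq[OF fl Un_upper1] le c1 by linarith
      moreover have "L aj = L ai \<union> L aj"
        using card_seteq[OF fl Un_upper2] le c1 by linarith
      ultimately have eq: "L ai = L aj" by simp
      have "L ai \<subseteq> Z" using I1Z eq by blast
      then have "L ai = Z" using list_eq_obs[OF S0(1)] inA AV unfolding Z_def by blast
      then have "d0 \<in> L ai" using S0(3) unfolding Z_def by simp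
      then show False using noT2[OF d0] by blast
    qed
    have A': "Ap = {al, at, ai, aj}" using A by auto
    show ?thesis
    proof (cases "2 * r + 2 \<le> card (\<Union> (L ` (V - {ai, aj})) - {c0})")
      case True
      show ?thesis using MD[OF A d c0 _ _ bigl True] noT1[OF c0] by blast
    next
      case F1: False
      show ?thesis
      proof (cases "2 * r + 2 \<le> card (\<Union> (L ` (V - {al, at})) - {d0})")
        case True
        show ?thesis
          using MD[OF A' d(6) d'(1) d'(3) d'(2) d'(4) d(1)
              d0 _ _ bigi True] noT2[OF d0] by blast
      next
        case F2: False
        define W where "W = \<Union> (L ` Qp)"
        have QV: "Qp \<subseteq> V" unfolding Qp_def by auto
        have fW: "finite W" unfolding W_def using finU[OF QV] .
        have cW: "2 * r + 2 \<le> card W" unfolding W_def using big_union_Q[OF r1] .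
        have X1: "\<Union> (L ` (V - {ai, aj})) = W"
        proof -
          have fX: "finite (\<Union> (L ` (V - {ai, aj})))" using finU[of "V - {ai, aj}"] by auto
          have sub: "W \<subseteq> \<Union> (L ` (V - {ai, aj}))" unfolding W_def Qp_def using inA unfolding Ap_def by auto
          have "card (\<Union> (L ` (V - {ai, aj}))) \<le> card (\<Union> (L ` (V - {ai, aj})) - {c0}) + 1"
            using card_Diff1_ge[OF fX] .
          then have "card (\<Union> (L ` (V - {ai, aj}))) \<le> card W" using F1 cW by linarith
          then show ?thesis using card_seteq[OF fX sub] by blast
        qed
        have X2: "\<Union> (L ` (V - {al, at})) = W"
        proof -
          have fX: "finite (\<Union> (L ` (V - {al, at})))" using finU[of "V - {al, at}"] by auto
          have sub: "W \<subseteq> \<Union> (L ` (V - {al, at}))" unfolding W_def Qp_def using inA unfolding Ap_def by auto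
          have "card (\<Union> (L ` (V - {al, at}))) \<le> card (\<Union> (L ` (V - {al, at})) - {d0}) + 1"
            using card_Diff1_ge[OF fX] .
          then have "card (\<Union> (L ` (V - {al, at}))) \<le> card W" using F2 cW by linarith
          then show ?thesis using card_seteq[OF fX sub] by blast
        qed
        have cW2: "card W = 2 * r + 2"
        proof -
          have fX: "finite (\<Union> (L ` (V - {ai, aj})))" using finU[of "V - {ai, aj}"] by auto
          have "card (\<Union> (L ` (V - {ai, aj}))) \<le> card (\<Union> (L ` (V - {ai, aj})) - {c0}) + 1"
            using card_Diff1_ge[OF fX] .
          then have "card (\<Union> (L ` (V - {ai, aj}))) \<le> 2 * r + 2" using F1 by linarith
          then show ?thesis using cW X1 by simp
        qed
        have allW: "\<forall>a\<in>Ap. L a \<subseteq> W"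
        proof
          fix a assume a: "a \<in> Ap"
          show "L a \<subseteq> W"
          proof (cases "a = ai \<or> a = aj")
            case True
            then have "a \<in> V - {al, at}" using a AV d by auto
            then show ?thesis using X2 by blast
          next
            case False
            then have "a = al \<or> a = at" using a A by auto
            then have "a \<in> V - {ai, aj}" using inA AV d by auto
            then show ?thesis using X1 by blast
          qed
        qed
        have ZW: "Z \<subseteq> W" unfolding Z_def W_def using S0(1) unfolding obs_def by auto
        define Z' where "Z' = W - Z"
        have cZ: "card Z = r + 1" unfolding Z_def using obs_card[OF S0(1)] .
        have fZ: "finite Z" using fW ZW finite_subset by blast
        have cZ': "card Z' = r + 1" unfolding Z'_def using card_Diff_subset[OF fZ ZW] cW2 cZ by simp
        have ZZ: "Z \<union> Z' = W" "Z \<inter> Z' = {}" unfolding Z'_def using ZW by auto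
        have hyp': "odd (r + 1) \<or> (\<exists>a\<in>Ap. r + 1 + 1 \<le> card (L a))" using hyp by auto
        have "\<exists>z\<in>Z. \<exists>z'\<in>Z'. \<forall>a\<in>Ap. z \<in> L a \<or> z' \<in> L a"
        proof (rule killcount[OF fZ _ ZZ(2) cZ cZ'])
          show "finite Z'" unfolding Z'_def using fW by auto
          show "finite Ap" using finS[OF AV] .
          show "card Ap \<le> 4" using cardA by simp
          show "\<forall>a\<in>Ap. L a \<subseteq> Z \<union> Z' \<and> r + 1 \<le> card (L a)" using allW ZZ(1) cardL AV by auto
          show "odd (r + 1) \<or> (\<exists>a\<in>Ap. r + 1 + 1 \<le> card (L a))" using hyp' .
        qed
        then obtain z z' where zz: "z \<in> Z" "z' \<in> Z'" "\<forall>a\<in>Ap. z \<in> L a \<or> z' \<in> L a" by blast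
        show ?thesis
        proof (rule C1[of "{z, z'}"])
          show "finite {z, z'}" by simp
          show "card {z, z'} \<le> 2" by (simp add: card_insert_if)
          show "\<forall>a\<in>Ap. L a \<inter> {z, z'} \<noteq> {}" using zz(3) by blast
          show "\<forall>S. obs S \<longrightarrow> card ({z, z'} \<inter> \<Union> (L ` S)) \<le> 1"
          proof (intro allI impI)
            fix S assume S: "obs S"
            have "\<Union> (L ` S) = Z \<or> \<Union> (L ` S) \<inter> Z = {}" using obs_dich[OF S S0(1) r1] unfolding Z_def .
            then have "z \<notin> \<Union> (L ` S) \<or> z' \<notin> \<Union> (L ` S)" using zz(1,2) ZZ(2) by blast
            then show "card ({z, z'} \<inter> \<Union> (L ` S)) \<le> 1" by (rule card2_int_le1)
          qed
        qed
      qed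
    qed
  qed
qed

end

lemma card4_obtain:
  assumes "card X = 4"
  obtains a b c d where "X = {a, b, c, d}" "a \<noteq> b" "a \<noteq> c" "a \<noteq> d" "b \<noteq> c" "b \<noteq> d" "c \<noteq> d"
proof -
  have "card X = Suc 3" using assms by simp
  then obtain a X1 where 1: "X = insert a X1" "a \<notin> X1" "card X1 = 3" using card_eq_SucD by blast
  then have "card X1 = Suc 2" by simp
  then obtain b X2 where 2: "X1 = insert b X2" "b \<notin> X2" "card X2 = 2" using card_eq_SucD by blast
  then have "card X2 = Suc 1" by simp
  then obtain c X3 where 3: "X2 = insert c X3" "c \<notin> X3" "card X3 = 1" using card_eq_SucD by blast
  then obtain d where 4: "X3 = {d}" using card_1_singletonE by blast
  show ?thesis
  proof (rule that)
    show "X = {a, b, c, d}" using 1 2 3 4 by auto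
  qed (use 1 2 3 4 in auto)
qed

context DS
begin

theorem Dmain:
  assumes hyp: "even r \<or> (\<exists>a\<in>Ap. r + 2 \<le> card (L a))"
  shows "colorable V p L"
proof (cases "r = 0")
  case True
  have "card Qp = 0" using cardQ True by simp
  then have Q0: "Qp = {}" using finS[of Qp] unfolding Qp_def by auto
  then have all0: "\<forall>v\<in>V. p v = 0" unfolding Qp_def by auto
  define \<psi> where "\<psi> = (\<lambda>v. SOME x. x \<in> L v)"
  show ?thesis unfolding colorable_def
  proof (intro exI conjI ballI impI)
    fix v assume v: "v \<in> V"
    then have "L v \<noteq> {}" using cardL[OF v] by auto
    then show "(\<lambda>v. SOME x. x \<in> L v) v \<in> L v" by (simp add: some_in_eq)
  next
    fix u v assume "u \<in> V" "v \<in> V" "p u \<noteq> p v"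
    then show "(\<lambda>v. SOME x. x \<in> L v) u \<noteq> (\<lambda>v. SOME x. x \<in> L v) v" using all0 by auto
  qed
next
  case False
  then have r1: "r \<ge> 1" by simp
  obtain a1 a2 a3 a4 where A: "Ap = {a1, a2, a3, a4}"
    and d: "a1 \<noteq> a2" "a1 \<noteq> a3" "a1 \<noteq> a4" "a2 \<noteq> a3" "a2 \<noteq> a4" "a3 \<noteq> a4"
    using card4_obtain[OF cardA] by blast
  have AV: "Ap \<subseteq> V" unfolding Ap_def by auto
  have finA: "finite Ap" using finS[OF AV] .
  show ?thesis
  proof (cases "\<exists>c. 3 \<le> card {a\<in>Ap. c \<in> L a}")
    case True
    then obtain c where c: "3 \<le> card {a\<in>Ap. c \<in> L a}" by blast
    have le4: "card {a\<in>Ap. c \<in> L a} \<le> 4" using card_mono[OF finA, of "{a\<in>Ap. c \<in> L a}"] cardA by auto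
    show ?thesis
    proof (cases "card {a\<in>Ap. c \<in> L a} = 4")
      case True
      have sub: "{a\<in>Ap. c \<in> L a} \<subseteq> Ap" by auto
      have "{a\<in>Ap. c \<in> L a} = Ap" using card_seteq[OF finA sub] True cardA by simp
      then have "\<forall>a\<in>Ap. c \<in> L a" by blast
      then show ?thesis by (rule quad)
    next
      case False
      then have "card {a\<in>Ap. c \<in> L a} = 3" using c le4 by linarith
      then show ?thesis using triple[OF r1] by blast
    qed
  next
    case False
    have nt: "\<forall>c. card {a\<in>Ap. c \<in> L a} \<le> 2"
    proof
      fix c
      have "\<not> 3 \<le> card {a\<in>Ap. c \<in> L a}" using False by blast
      then show "card {a\<in>Ap. c \<in> L a} \<le> 2" by linarith
    qed
    have d': "a2 \<noteq> a1" "a3 \<noteq> a1" "a4 \<noteq> a1" "a3 \<noteq> a2" "a4 \<noteq> a2" "a4 \<noteq> a3" using d by auto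
    have A1: "Ap = {a1, a3, a2, a4}" using A by auto
    have A2: "Ap = {a1, a4, a2, a3}" using A by auto
    have A3: "Ap = {a3, a4, a1, a2}" using A by auto
    have A4: "Ap = {a2, a4, a1, a3}" using A by auto
    have A5: "Ap = {a2, a3, a1, a4}" using A by auto
    show ?thesis
    proof (cases "L a1 \<inter> L a2 \<noteq> {} \<and> L a3 \<inter> L a4 \<noteq> {}")
      case True then show ?thesis using PM[OF r1 A d nt _ _ hyp] by blast
    next
      case n1: False
      show ?thesis
      proof (cases "L a1 \<inter> L a3 \<noteq> {} \<and> L a2 \<inter> L a4 \<noteq> {}")
        case True then show ?thesis using PM[OF r1 A1 d(2) d(1) d(3) d'(4) d(6) d(5) nt _ _ hyp] by blast
      next
        case n2: False
        show ?thesis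
        proof (cases "L a1 \<inter> L a4 \<noteq> {} \<and> L a2 \<inter> L a3 \<noteq> {}")
          case True then show ?thesis using PM[OF r1 A2 d(3) d(1) d(2) d'(5) d'(6) d(4) nt _ _ hyp] by blast
        next
          case n3: False
          show ?thesis
          proof (cases "L a1 \<inter> L a2 \<noteq> {}")
            case True
            then have "L a3 \<inter> L a4 = {}" using n1 by blast
            then show ?thesis using MDiv[OF r1 A d nt True] by blast
          next
            case m1: False
            show ?thesis
            proof (cases "L a3 \<inter> L a4 \<noteq> {}")
              case True
              have "L a1 \<inter> L a2 = {}" using m1 by blast
              then show ?thesis using MDiv[OF r1 A3 d(6) d'(2) d'(4) d'(3) d'(5) d(1) nt True] by blast
            next
              case m2: False
              show ?thesis
              proof (cases "L a1 \<inter> L a3 \<noteq> {}")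
                case True
                then have "L a2 \<inter> L a4 = {}" using n2 by blast
                then show ?thesis using MDiv[OF r1 A1 d(2) d(1) d(3) d'(4) d(6) d(5) nt True] by blast
              next
                case m3: False
                show ?thesis
                proof (cases "L a2 \<inter> L a4 \<noteq> {}")
                  case True
                  have "L a1 \<inter> L a3 = {}" using m3 by blast
                  then show ?thesis using MDiv[OF r1 A4 d(5) d'(1) d(4) d'(3) d'(6) d(2) nt True] by blast
                next
                  case m4: False
                  show ?thesis
                  proof (cases "L a1 \<inter> L a4 \<noteq> {}")
                    case True
                    then have "L a2 \<inter> L a3 = {}" using n3 by blast
                    then show ?thesis using MDiv[OF r1 A2 d(3) d(1) d(2) d'(5) d'(6) d(4) nt True] by blast
                  next
                    case m5: False
                    show ?thesis
                    proof (cases "L a2 \<inter> L a3 \<noteq> {}")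
                      case True
                      have "L a1 \<inter> L a4 = {}" using m5 by blast
                      then show ?thesis using MDiv[OF r1 A5 d(4) d'(1) d(5) d'(2) d(6) d(3) nt True] by blast
                    next
                      case m6: False
                      have "\<forall>u\<in>Ap. \<forall>v\<in>Ap. u \<noteq> v \<longrightarrow> L u \<inter> L v = {}"
                      proof (intro ballI impI)
                        fix u v assume uv: "u \<in> Ap" "v \<in> Ap" "u \<noteq> v"
                        have "u = a1 \<or> u = a2 \<or> u = a3 \<or> u = a4" "v = a1 \<or> v = a2 \<or> v = a3 \<or> v = a4"
                          using uv A by auto
                        then show "L u \<inter> L v = {}" using m1 m2 m3 m4 m5 m6 uv(3) by auto
                      qed
                      then show ?thesis by (rule whole[OF r1])
                    qed
                  qed
                qed
              qed
            qed
          qed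
        qed
      qed
    qed
  qed
qed

end

lemma extend_col:
  assumes "colorable V' p L'" "V' \<subseteq> V" "\<forall>v\<in>V'. L' v \<subseteq> L v - C"
    "\<forall>v\<in>V - V'. g v \<in> L v \<and> g v \<in> C" "\<forall>u\<in>V - V'. \<forall>w\<in>V - V'. p u \<noteq> p w \<longrightarrow> g u \<noteq> g w"
  shows "colorable V p L"
proof -
  obtain \<psi> where psi: "\<forall>v\<in>V'. \<psi> v \<in> L' v" "\<forall>u\<in>V'. \<forall>v\<in>V'. p u \<noteq> p v \<longrightarrow> \<psi> u \<noteq> \<psi> v"
    using assms(1) unfolding colorable_def by blast
  have psi2: "\<forall>v\<in>V'. \<psi> v \<in> L v \<and> \<psi> v \<notin> C" using psi(1) assms(3) by blast
  show ?thesis unfolding colorable_def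
  proof (intro exI conjI ballI impI)
    fix v assume "v \<in> V"
    then show "(\<lambda>v. if v \<in> V' then \<psi> v else g v) v \<in> L v" using psi2 assms(4) by auto
  next
    fix u w assume uw: "u \<in> V" "w \<in> V" "p u \<noteq> p w"
    show "(\<lambda>v. if v \<in> V' then \<psi> v else g v) u \<noteq> (\<lambda>v. if v \<in> V' then \<psi> v else g v) w"
    proof (cases "u \<in> V'")
      case True
      show ?thesis
      proof (cases "w \<in> V'")
        case True then show ?thesis using \<open>u \<in> V'\<close> psi(2) uw by auto
      next
        case False
        then have "g w \<in> C" using assms(4) uw by auto
        then show ?thesis using \<open>u \<in> V'\<close> False psi2 by auto
      qed
    next
      case False
      show ?thesis
      proof (cases "w \<in> V'")
        case True
        have "g u \<in> C" using assms(4) uw False by auto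
        then show ?thesis using True False psi2 by auto
      next
        case F2: False
        then show ?thesis using False assms(5) uw by auto
      qed
    qed
  qed
qed

lemma card_Diff1_ge_gen: "finite X \<Longrightarrow> card X \<le> card (X - {c}) + 1"
proof (cases "c \<in> X")
  case True
  assume f: "finite X"
  then have "card X > 0" using True card_gt_0_iff by blast
  then show ?thesis using True f by (simp add: card_Diff_singleton)
next
  case False then show ?thesis by simp
qed

lemma cardQ_gen:
  assumes "finite V" "\<forall>i\<in>p ` V - {0}. card {v\<in>V. p v = i} = 2"
  shows "card {v\<in>V. p v \<noteq> 0} = 2 * card (p ` V - {0})"
proof -
  have e: "{v\<in>V. p v \<noteq> 0} = (\<Union>i\<in>p ` V - {0}. {v\<in>V. p v = i})" by auto
  have "card {v\<in>V. p v \<noteq> 0} = (\<Sum>i\<in>p ` V - {0}. card {v\<in>V. p v = i})"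
    unfolding e using assms(1) by (intro card_UN_disjoint) auto
  also have "\<dots> = (\<Sum>i\<in>p ` V - {0}. 2)" using assms(2) by (intro sum.cong) auto
  finally show ?thesis by simp
qed

lemma card_minus2: "finite X \<Longrightarrow> card X \<le> card (X - {c, d}) + 2"
proof -
  assume f: "finite X"
  have "card X \<le> card (X - {c, d}) + card {c, d}"
  proof -
    have "X \<subseteq> (X - {c, d}) \<union> {c, d}" by auto
    then have "card X \<le> card ((X - {c, d}) \<union> {c, d})" using f by (intro card_mono) auto
    also have "\<dots> \<le> card (X - {c, d}) + card {c, d}" by (rule card_Un_le)
    finally show ?thesis .
  qed
  moreover have "card {c, d} \<le> 2" by (simp add: card_insert_if)
  ultimately show ?thesis by linarith
qed

theorem Emain:
  fixes V :: "'v set" and p :: "'v \<Rightarrow> nat" and L :: "'v \<Rightarrow> 'c set"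
  assumes "finite V" "card {v\<in>V. p v = 0} = 4" "\<forall>i\<in>p ` V - {0}. card {v\<in>V. p v = i} = 2"
    "card (p ` V - {0}) = 2 * m" "\<forall>v\<in>V. finite (L v) \<and> 2 * m + 1 \<le> card (L v)"
  shows "colorable V p L"
  using assms
proof (induction m arbitrary: V L rule: less_induct)
  case (less m)
  note fin = less.prems(1) and A4 = less.prems(2) and P2 = less.prems(3) and rm = less.prems(4)
    and lst = less.prems(5)
  define Qp where "Qp = {v\<in>V. p v \<noteq> 0}"
  have QV: "Qp \<subseteq> V" unfolding Qp_def by auto
  show ?case
  proof (cases "\<exists>c. \<forall>v\<in>V. p v = 0 \<longrightarrow> c \<in> L v")
    case True
    then obtain c where c: "\<forall>v\<in>V. p v = 0 \<longrightarrow> c \<in> L v" by blast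
    have "colorable Qp p (\<lambda>v. L v - {c})"
    proof (rule LA[where s = "2 * m"])
      show "finite Qp" using fin QV finite_subset by blast
      show "\<forall>v\<in>Qp. finite (L v - {c}) \<and> 2 * m \<le> card (L v - {c})"
      proof
        fix v assume v: "v \<in> Qp"
        then have "finite (L v)" "2 * m + 1 \<le> card (L v)" using lst QV by auto
        moreover have "card (L v) \<le> card (L v - {c}) + 1"
          using card_Diff1_ge_gen[OF \<open>finite (L v)\<close>] .
        ultimately show "finite (L v - {c}) \<and> 2 * m \<le> card (L v - {c})" by simp
      qed
      have pQ: "p ` Qp = p ` V - {0}" unfolding Qp_def by auto
      have "(\<Sum>i\<in>p ` Qp. (card {v\<in>Qp. p v = i} + 1) div 2) = (\<Sum>i\<in>p ` V - {0}. 1)"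
      proof (rule sum.cong)
        show "p ` Qp = p ` V - {0}" using pQ .
        fix i assume i: "i \<in> p ` V - {0}"
        then have "{v\<in>Qp. p v = i} = {v\<in>V. p v = i}" unfolding Qp_def by auto
        then show "(card {v\<in>Qp. p v = i} + 1) div 2 = 1" using P2 i by simp
      qed
      then show "(\<Sum>i\<in>p ` Qp. (card {v\<in>Qp. p v = i} + 1) div 2) \<le> 2 * m" using rm by simp
      show "card Qp \<le> 2 * (2 * m)" using cardQ_gen[OF fin P2] rm unfolding Qp_def by simp
    qed
    then show ?thesis
    proof (rule extend_col[where C = "{c}" and g = "\<lambda>_. c"])
      show "Qp \<subseteq> V" using QV .
      show "\<forall>v\<in>Qp. L v - {c} \<subseteq> L v - {c}" by blast
      show "\<forall>v\<in>V - Qp. c \<in> L v \<and> c \<in> {c}" using c unfolding Qp_def by auto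
      show "\<forall>u\<in>V - Qp. \<forall>w\<in>V - Qp. p u \<noteq> p w \<longrightarrow> c \<noteq> c" unfolding Qp_def by auto
    qed
  next
    case nq: False
    show ?thesis
    proof (cases "\<exists>i j c d. i \<in> p ` V - {0} \<and> j \<in> p ` V - {0} \<and> i \<noteq> j \<and> c \<noteq> d \<and>
        (\<forall>v\<in>V. p v = i \<longrightarrow> c \<in> L v) \<and> (\<forall>v\<in>V. p v = j \<longrightarrow> d \<in> L v)")
      case True
      then obtain i j c d where ij: "i \<in> p ` V - {0}" "j \<in> p ` V - {0}" "i \<noteq> j" "c \<noteq> d"
        "\<forall>v\<in>V. p v = i \<longrightarrow> c \<in> L v" "\<forall>v\<in>V. p v = j \<longrightarrow> d \<in> L v" by blast
      define V' where "V' = {v\<in>V. p v \<noteq> i \<and> p v \<noteq> j}"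
      have pV': "p ` V' - {0} = (p ` V - {0}) - {i, j}" unfolding V'_def by auto
      have fP: "finite (p ` V - {0})" using fin by auto
      have cP: "card (p ` V' - {0}) = 2 * m - 2"
        unfolding pV' using ij rm fP by (simp add: card_Diff_subset)
      have m1: "m \<ge> 1"
      proof -
        have "{i, j} \<subseteq> p ` V - {0}" using ij by auto
        then have "card {i, j} \<le> card (p ` V - {0})" using card_mono[OF fP] by blast
        then have "card {i, j} \<le> 2 * m" using rm by simp
        then show ?thesis using ij(3) by simp
      qed
      have lt: "m - 1 < m" using m1 by simp
      have "colorable V' p (\<lambda>v. L v - {c, d})"
      proof (rule less.IH[OF lt])
        show "finite V'" unfolding V'_def using fin by auto
        have "{v\<in>V'. p v = 0} = {v\<in>V. p v = 0}" unfolding V'_def using ij by auto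
        then show "card {v\<in>V'. p v = 0} = 4" using A4 by simp
        show "\<forall>k\<in>p ` V' - {0}. card {v\<in>V'. p v = k} = 2"
        proof
          fix k assume k: "k \<in> p ` V' - {0}"
          then have "{v\<in>V'. p v = k} = {v\<in>V. p v = k}" "k \<in> p ` V - {0}" unfolding V'_def by auto
          then show "card {v\<in>V'. p v = k} = 2" using P2 by auto
        qed
        show "card (p ` V' - {0}) = 2 * (m - 1)" using cP by simp
        show "\<forall>v\<in>V'. finite (L v - {c, d}) \<and> 2 * (m - 1) + 1 \<le> card (L v - {c, d})"
        proof
          fix v assume "v \<in> V'"
          then have "finite (L v)" "2 * m + 1 \<le> card (L v)" using lst unfolding V'_def by auto
          moreover have "card (L v) \<le> card (L v - {c, d}) + 2" using card_minus2[OF \<open>finite (L v)\<close>] .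
          ultimately have cc: "2 * (m - 1) + 1 \<le> card (L v - {c, d})" using m1 by linarith
          have ff: "finite (L v - {c, d})" using \<open>finite (L v)\<close> by (rule finite_Diff)
          show "finite (L v - {c, d}) \<and> 2 * (m - 1) + 1 \<le> card (L v - {c, d})" using ff cc by (rule conjI)
        qed
      qed
      then show ?thesis
      proof (rule extend_col[where C = "{c, d}" and g = "\<lambda>v. if p v = i then c else d"])
        show "V' \<subseteq> V" unfolding V'_def by auto
        show "\<forall>v\<in>V'. L v - {c, d} \<subseteq> L v - {c, d}" by blast
        show "\<forall>v\<in>V - V'. (if p v = i then c else d) \<in> L v \<and> (if p v = i then c else d) \<in> {c, d}"
          using ij(5,6) unfolding V'_def by auto
        show "\<forall>u\<in>V - V'. \<forall>w\<in>V - V'. p u \<noteq> p w \<longrightarrow> (if p u = i then c else d) \<noteq> (if p w = i then c else d)"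
          using ij(3,4) unfolding V'_def by auto
      qed
    next
      case n2: False
      show ?thesis
      proof (cases "\<forall>u\<in>V. \<forall>v\<in>V. u \<noteq> v \<longrightarrow> p u = p v \<longrightarrow> p u \<noteq> 0 \<longrightarrow> L u \<inter> L v = {}")
        case True
        interpret DS V p L "2 * m"
        proof
          show "finite V" using fin .
          show "card {v\<in>V. p v = 0} = 4" using A4 .
          show "\<forall>i\<in>p ` V - {0}. card {v\<in>V. p v = i} = 2" using P2 .
          show "card (p ` V - {0}) = 2 * m" using rm .
          show "\<forall>v\<in>V. finite (L v) \<and> 2 * m + 1 \<le> card (L v)" using lst .
          show "\<forall>u\<in>V. \<forall>v\<in>V. u \<noteq> v \<longrightarrow> p u = p v \<longrightarrow> p u \<noteq> 0 \<longrightarrow> L u \<inter> L v = {}" using True .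
        qed
        show ?thesis by (rule Dmain) simp
      next
        case False
        have "\<exists>u\<in>V. \<exists>v\<in>V. u \<noteq> v \<and> p u = p v \<and> p u \<noteq> 0 \<and> L u \<inter> L v \<noteq> {}"
          using False by blast
        then obtain u v where uv0: "u \<in> V" "v \<in> V" "u \<noteq> v" "p u = p v" "p u \<noteq> 0" "L u \<inter> L v \<noteq> {}"
          by blast
        then obtain e where e: "e \<in> L u" "e \<in> L v" by blast
        note uv = uv0(1-5) e
        define i where "i = p u"
        have iP: "i \<in> p ` V - {0}" unfolding i_def using uv by auto
        have parti: "{w\<in>V. p w = i} = {u, v}"
        proof -
          have sub: "{u, v} \<subseteq> {w\<in>V. p w = i}" using uv unfolding i_def by auto
          have c2: "card {w\<in>V. p w = i} = 2" using P2 iP by blast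
          have c2': "card {u, v} = 2" using uv(3) by simp
          have fi: "finite {w\<in>V. p w = i}" using fin by simp
          have "{u, v} = {w\<in>V. p w = i}" using card_seteq[OF fi sub] c2 c2' by linarith
          then show ?thesis by simp
        qed
        have ei: "\<forall>w\<in>V. p w = i \<longrightarrow> e \<in> L w"
        proof (intro ballI impI)
          fix w assume w: "w \<in> V" "p w = i"
          then have "w \<in> {w\<in>V. p w = i}" by simp
          then have "w = u \<or> w = v" unfolding parti by simp
          then show "e \<in> L w" using uv by blast
        qed
        define V' where "V' = {w\<in>V. p w \<noteq> i}"
        define L' where "L' = (\<lambda>w. L w - {e})"
        have fP: "finite (p ` V - {0})" using fin by auto
        have "card (p ` V - {0}) > 0" using iP fP card_gt_0_iff by blast
        then have m1: "m \<ge> 1" using rm by simp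
        have pV': "p ` V' - {0} = (p ` V - {0}) - {i}" unfolding V'_def by auto
        have cP: "card (p ` V' - {0}) = 2 * m - 1" unfolding pV' using iP rm fP by (simp add: card_Diff_singleton)
        interpret D': DS V' p L' "2 * m - 1"
        proof
          show "finite V'" unfolding V'_def using fin by auto
          have "{w\<in>V'. p w = 0} = {w\<in>V. p w = 0}" unfolding V'_def using iP by auto
          then show "card {w\<in>V'. p w = 0} = 4" using A4 by simp
          show "\<forall>k\<in>p ` V' - {0}. card {w\<in>V'. p w = k} = 2"
          proof
            fix k assume k: "k \<in> p ` V' - {0}"
            then have "{w\<in>V'. p w = k} = {w\<in>V. p w = k}" "k \<in> p ` V - {0}" unfolding V'_def by auto
            then show "card {w\<in>V'. p w = k} = 2" using P2 by auto
          qed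
          show "card (p ` V' - {0}) = 2 * m - 1" using cP .
          show "\<forall>w\<in>V'. finite (L' w) \<and> 2 * m - 1 + 1 \<le> card (L' w)"
          proof
            fix w assume "w \<in> V'"
            then have "finite (L w)" "2 * m + 1 \<le> card (L w)" using lst unfolding V'_def by auto
            moreover have "card (L w) \<le> card (L w - {e}) + 1" using card_Diff1_ge_gen[OF \<open>finite (L w)\<close>] .
            ultimately have cc: "2 * m - 1 + 1 \<le> card (L' w)" unfolding L'_def using m1 by linarith
            have ff: "finite (L' w)" unfolding L'_def using \<open>finite (L w)\<close> by (rule finite_Diff)
            show "finite (L' w) \<and> 2 * m - 1 + 1 \<le> card (L' w)" using ff cc by (rule conjI)
          qed
          show "\<forall>a\<in>V'. \<forall>b\<in>V'. a \<noteq> b \<longrightarrow> p a = p b \<longrightarrow> p a \<noteq> 0 \<longrightarrow> L' a \<inter> L' b = {}"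
          proof (intro ballI impI)
            fix a b assume ab: "a \<in> V'" "b \<in> V'" "a \<noteq> b" "p a = p b" "p a \<noteq> 0"
            show "L' a \<inter> L' b = {}"
            proof (rule ccontr)
              assume "L' a \<inter> L' b \<noteq> {}"
              then obtain d where d: "d \<in> L a" "d \<in> L b" "d \<noteq> e" unfolding L'_def by blast
              define j where "j = p a"
              have jP: "j \<in> p ` V - {0}" unfolding j_def using ab unfolding V'_def by auto
              have ji: "j \<noteq> i" unfolding j_def using ab unfolding V'_def by auto
              have partj: "{w\<in>V. p w = j} = {a, b}"
              proof -
                have sub: "{a, b} \<subseteq> {w\<in>V. p w = j}" using ab unfolding j_def V'_def by auto
                have c2: "card {w\<in>V. p w = j} = 2" using P2 jP by blast
                have c2': "card {a, b} = 2" using ab(3) by simp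
                have fi: "finite {w\<in>V. p w = j}" using fin by simp
                have "{a, b} = {w\<in>V. p w = j}" using card_seteq[OF fi sub] c2 c2' by linarith
                then show ?thesis by simp
              qed
              have dj: "\<forall>w\<in>V. p w = j \<longrightarrow> d \<in> L w"
              proof (intro ballI impI)
                fix w assume w: "w \<in> V" "p w = j"
                then have "w \<in> {w\<in>V. p w = j}" by simp
                then have "w = a \<or> w = b" unfolding partj by simp
                then show "d \<in> L w" using d by blast
              qed
              have "\<exists>i j c d. i \<in> p ` V - {0} \<and> j \<in> p ` V - {0} \<and> i \<noteq> j \<and> c \<noteq> d \<and>
                (\<forall>v\<in>V. p v = i \<longrightarrow> c \<in> L v) \<and> (\<forall>v\<in>V. p v = j \<longrightarrow> d \<in> L v)"
              proof (intro exI conjI)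
                show "i \<in> p ` V - {0}" using iP .
                show "j \<in> p ` V - {0}" using jP .
                show "i \<noteq> j" using ji by simp
                show "e \<noteq> d" using d(3) by simp
                show "\<forall>v\<in>V. p v = i \<longrightarrow> e \<in> L v" using ei .
                show "\<forall>v\<in>V. p v = j \<longrightarrow> d \<in> L v" using dj .
              qed
              then show False using n2 by blast
            qed
          qed
        qed
        have hypD: "even (2 * m - 1) \<or> (\<exists>a\<in>D'.Ap. 2 * m - 1 + 2 \<le> card (L' a))"
        proof -
          have "\<not> (\<forall>v\<in>V. p v = 0 \<longrightarrow> e \<in> L v)" using nq by blast
          then obtain a where a: "a \<in> V" "p a = 0" "e \<notin> L a" by blast
          have aV': "a \<in> V'" unfolding V'_def using a iP by auto
          have "a \<in> D'.Ap" unfolding D'.Ap_def using aV' a(2) by simp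
          moreover have "L' a = L a" unfolding L'_def using a(3) by auto
          moreover have "2 * m + 1 \<le> card (L a)" using lst a by auto
          ultimately have "2 * m - 1 + 2 \<le> card (L' a)" using m1 by simp
          then show ?thesis using \<open>a \<in> D'.Ap\<close> by blast
        qed
        have "colorable V' p L'" using D'.Dmain[OF hypD] .
        then show ?thesis
        proof (rule extend_col[where C = "{e}" and g = "\<lambda>_. e"])
          show "V' \<subseteq> V" unfolding V'_def by auto
          show "\<forall>w\<in>V'. L' w \<subseteq> L w - {e}" unfolding L'_def by blast
          show "\<forall>w\<in>V - V'. e \<in> L w \<and> e \<in> {e}" using ei unfolding V'_def by auto
          show "\<forall>a\<in>V - V'. \<forall>b\<in>V - V'. p a \<noteq> p b \<longrightarrow> e \<noteq> e" unfolding V'_def by auto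
        qed
      qed
    qed
  qed
qed

lemma K_fin: "finite (K422_V k)"
proof -
  have "K422_V k \<subseteq> {0..<k} \<times> {0..<4}" unfolding K422_V_def by (auto split: if_splits)
  then show ?thesis using finite_subset by blast
qed

lemma K_part0: "{v\<in>K422_V k. fst v = 0} = (if k = 0 then {} else {(0,0),(0,1),(0,2),(0,3)})"
  unfolding K422_V_def by (auto simp: less_Suc_eq numeral_eq_Suc)

lemma K_card0: "k \<ge> 1 \<Longrightarrow> card {v\<in>K422_V k. fst v = 0} = 4"
  unfolding K_part0 by simp

lemma K_parti: "1 \<le> i \<Longrightarrow> i < k \<Longrightarrow> {v\<in>K422_V k. fst v = i} = {(i,0),(i,1)}"
  unfolding K422_V_def by (auto simp: less_Suc_eq numeral_eq_Suc)

lemma K_img: "fst ` K422_V k = {0..<k}"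
proof
  show "fst ` K422_V k \<subseteq> {0..<k}" unfolding K422_V_def by auto
  show "{0..<k} \<subseteq> fst ` K422_V k"
  proof
    fix i assume "i \<in> {0..<k}"
    then have "(i, 0) \<in> K422_V k" unfolding K422_V_def by auto
    then show "i \<in> fst ` K422_V k" by force
  qed
qed

lemma K_img0: "fst ` K422_V k - {0} = {1..<k}"
  unfolding K_img by auto

lemma K_pairs: "\<forall>i\<in>fst ` K422_V k - {0}. card {v\<in>K422_V k. fst v = i} = 2"
proof
  fix i assume "i \<in> fst ` K422_V k - {0}"
  then have "1 \<le> i" "i < k" unfolding K_img0 by auto
  then show "card {v\<in>K422_V k. fst v = i} = 2" using K_parti by simp
qed

lemma K_nparts: "card (fst ` K422_V k - {0}) = k - 1"
  unfolding K_img0 by simp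

lemma proper_iff: "(\<exists>\<psi>. proper_L_coloring (K422_V k) K422_E L \<psi>) \<longleftrightarrow> colorable (K422_V k) fst L"
  unfolding proper_L_coloring_def colorable_def K422_E_def by simp

lemma upper_odd:
  assumes "odd k" "2 \<le> k" "\<forall>v\<in>K422_V k. finite (L v) \<and> k \<le> card (L v)"
  shows "colorable (K422_V k) fst L"
proof -
  obtain m where m: "k = 2 * m + 1" using assms(1) oddE by blast
  show ?thesis
  proof (rule Emain[where m = m])
    show "finite (K422_V k)" by (rule K_fin)
    show "card {v\<in>K422_V k. fst v = 0} = 4" using K_card0 assms(2) by simp
    show "\<forall>i\<in>fst ` K422_V k - {0}. card {v\<in>K422_V k. fst v = i} = 2" by (rule K_pairs)
    show "card (fst ` K422_V k - {0}) = 2 * m" using K_nparts m by simp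
    show "\<forall>v\<in>K422_V k. finite (L v) \<and> 2 * m + 1 \<le> card (L v)" using assms(3) m by simp
  qed
qed

lemma upper_even:
  assumes "2 \<le> k" "\<forall>v\<in>K422_V k. finite (L v) \<and> k + 1 \<le> card (L v)"
  shows "colorable (K422_V k) fst L"
proof (rule LA[where s = "k + 1"])
  show "finite (K422_V k)" by (rule K_fin)
  show "\<forall>v\<in>K422_V k. finite (L v) \<and> k + 1 \<le> card (L v)" using assms(2) .
  have e: "fst ` K422_V k = insert 0 {1..<k}" unfolding K_img using assms(1) by auto
  have "(\<Sum>i\<in>fst ` K422_V k. (card {v\<in>K422_V k. fst v = i} + 1) div 2)
      = (card {v\<in>K422_V k. fst v = 0} + 1) div 2 + (\<Sum>i\<in>{1..<k}. (card {v\<in>K422_V k. fst v = i} + 1) div 2)"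
    unfolding e by (subst sum.insert) auto
  also have "(\<Sum>i\<in>{1..<k}. (card {v\<in>K422_V k. fst v = i} + 1) div 2) = (\<Sum>i\<in>{1..<k}. 1)"
    by (intro sum.cong) (auto simp: K_parti)
  also have "(card {v\<in>K422_V k. fst v = 0} + 1) div 2 = 2" using K_card0 assms(1) by simp
  finally show "(\<Sum>i\<in>fst ` K422_V k. (card {v\<in>K422_V k. fst v = i} + 1) div 2) \<le> k + 1"
    using assms(1) by simp
  have "card (K422_V k) = card {v\<in>K422_V k. fst v \<noteq> 0} + card {v\<in>K422_V k. fst v = 0}"
  proof -
    have "K422_V k = {v\<in>K422_V k. fst v \<noteq> 0} \<union> {v\<in>K422_V k. fst v = 0}" by auto
    then show ?thesis using K_fin[of k] by (metis (no_types, lifting) card_Un_disjoint disjoint_iff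
          finite_Un mem_Collect_eq)
  qed
  also have "card {v\<in>K422_V k. fst v \<noteq> 0} = 2 * (k - 1)"
    using cardQ_gen[OF K_fin K_pairs] K_nparts by simp
  finally show "card (K422_V k) \<le> 2 * (k + 1)" using K_card0 assms(1) by simp
qed

lemma indep_ge:
  assumes "finite U" "T \<subseteq> U" "\<forall>u\<in>T. \<forall>v\<in>T. \<not> F u v"
  shows "card T \<le> indep_number U F"
proof -
  have fin: "finite {S. S \<subseteq> U \<and> independent_set S F}" using assms(1) by simp
  have "T \<in> {S. S \<subseteq> U \<and> independent_set S F}" using assms(2,3) unfolding independent_set_def by auto
  then have "card T \<in> card ` {S. S \<subseteq> U \<and> independent_set S F}" by blast
  then show ?thesis unfolding indep_number_def using fin by (intro Max_ge) auto
qed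

lemma card_filter_sum: "finite A \<Longrightarrow> card {x\<in>A. P x} = (\<Sum>x\<in>A. if P x then 1 else 0)"
proof -
  assume f: "finite A"
  have "card {x\<in>A. P x} = (\<Sum>x\<in>{x\<in>A. P x}. 1)" by simp
  also have "\<dots> = (\<Sum>x\<in>A. if P x then 1 else 0)" using f by (rule sum.inter_filter)
  finally show ?thesis .
qed

lemma charge:
  fixes L :: "nat \<times> nat \<Rightarrow> nat set" and pf :: "nat \<Rightarrow> nat"
  assumes "finite W" "\<forall>v\<in>W. finite (L v)" "\<forall>u v. F u v \<longrightarrow> fst u \<noteq> fst v"
  shows "(\<Sum>v\<in>W. card {\<sigma>\<in>L v. pf \<sigma> = fst v}) \<le> (\<Sum>\<sigma>\<in>\<Union> (L ` W). indep_number {v\<in>W. \<sigma> \<in> L v} F)"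
proof -
  define U where "U = \<Union> (L ` W)"
  have fU: "finite U" unfolding U_def using assms(1,2) by auto
  have s1: "\<And>\<sigma>. card {v\<in>W. \<sigma> \<in> L v \<and> fst v = pf \<sigma>} \<le> indep_number {v\<in>W. \<sigma> \<in> L v} F"
  proof -
    fix \<sigma>
    show "card {v\<in>W. \<sigma> \<in> L v \<and> fst v = pf \<sigma>} \<le> indep_number {v\<in>W. \<sigma> \<in> L v} F"
    proof (rule indep_ge)
      show "finite {v\<in>W. \<sigma> \<in> L v}" using assms(1) by simp
      show "{v\<in>W. \<sigma> \<in> L v \<and> fst v = pf \<sigma>} \<subseteq> {v\<in>W. \<sigma> \<in> L v}" by auto
      show "\<forall>u\<in>{v\<in>W. \<sigma> \<in> L v \<and> fst v = pf \<sigma>}. \<forall>v\<in>{v\<in>W. \<sigma> \<in> L v \<and> fst v = pf \<sigma>}. \<not> F u v"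
        using assms(3) by auto
    qed
  qed
  have "(\<Sum>\<sigma>\<in>U. card {v\<in>W. \<sigma> \<in> L v \<and> fst v = pf \<sigma>})
      = (\<Sum>\<sigma>\<in>U. \<Sum>v\<in>W. if \<sigma> \<in> L v \<and> fst v = pf \<sigma> then 1 else 0)"
    using assms(1) by (intro sum.cong refl card_filter_sum)
  also have "\<dots> = (\<Sum>v\<in>W. \<Sum>\<sigma>\<in>U. if \<sigma> \<in> L v \<and> fst v = pf \<sigma> then 1 else 0)"
    by (rule sum.swap)
  also have "\<dots> = (\<Sum>v\<in>W. card {\<sigma>\<in>U. \<sigma> \<in> L v \<and> fst v = pf \<sigma>})"
    using fU by (intro sum.cong refl card_filter_sum[symmetric])
  also have "\<dots> = (\<Sum>v\<in>W. card {\<sigma>\<in>L v. pf \<sigma> = fst v})"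
  proof (rule sum.cong)
    fix v assume "v \<in> W"
    then have "{\<sigma>\<in>U. \<sigma> \<in> L v \<and> fst v = pf \<sigma>} = {\<sigma>\<in>L v. pf \<sigma> = fst v}" unfolding U_def by auto
    then show "card {\<sigma>\<in>U. \<sigma> \<in> L v \<and> fst v = pf \<sigma>} = card {\<sigma>\<in>L v. pf \<sigma> = fst v}" by simp
  qed simp
  finally have e: "(\<Sum>v\<in>W. card {\<sigma>\<in>L v. pf \<sigma> = fst v}) = (\<Sum>\<sigma>\<in>U. card {v\<in>W. \<sigma> \<in> L v \<and> fst v = pf \<sigma>})" by simp
  also have "\<dots> \<le> (\<Sum>\<sigma>\<in>U. indep_number {v\<in>W. \<sigma> \<in> L v} F)" using s1 by (intro sum_mono) auto
  finally show ?thesis unfolding U_def .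
qed

definition L0 :: "nat \<Rightarrow> nat \<times> nat \<Rightarrow> nat set" where
  "L0 m v = (if fst v = 0 then (if snd v < 2 then {0..<m} else {m..<2*m}) \<union>
                                 (if even (snd v) then {2*m..<3*m} else {3*m..<4*m})
             else if fst v < 2 * m then (if snd v = 0 then {0..<2*m} else {2*m..<4*m})
             else (if snd v = 0 then {4*m..<6*m} else {6*m..<8*m}))"

lemma L0_fin: "finite (L0 m v)" unfolding L0_def by auto

lemma L0_card: "card (L0 m v) = 2 * m"
proof -
  have a: "card ((if snd v < 2 then {0..<m} else {m..<2*m}) \<union> (if even (snd v) then {2*m..<3*m} else {3*m..<4*m})) = 2 * m"
    by (subst card_Un_disjoint) auto
  show ?thesis unfolding L0_def using a by auto
qed

lemma K_mem: "(i, j) \<in> K422_V k \<longleftrightarrow> i < k \<and> j < (if i = 0 then 4 else 2)"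
  unfolding K422_V_def by simp

lemma L0_noncol:
  assumes m1: "m \<ge> 1" and k: "k = 2 * m \<or> k = 2 * m + 1" and col: "colorable (K422_V k) fst (L0 m)"
  shows False
proof -
  obtain \<psi> where psi: "\<forall>v\<in>K422_V k. \<psi> v \<in> L0 m v"
    "\<forall>u\<in>K422_V k. \<forall>v\<in>K422_V k. fst u \<noteq> fst v \<longrightarrow> \<psi> u \<noteq> \<psi> v"
    using col unfolding colorable_def by blast
  have inV: "\<And>i j. i < 2 * m \<Longrightarrow> j < 2 \<Longrightarrow> (i, j) \<in> K422_V k" using k by (auto simp: K_mem)
  have inV0: "\<And>j. j < 4 \<Longrightarrow> (0, j) \<in> K422_V k" using k m1 by (auto simp: K_mem)
  define fx where "fx = (\<lambda>i. \<psi> (i, 0::nat))"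
  define fy where "fy = (\<lambda>i. \<psi> (i, 1::nat))"
  have injx: "inj_on fx {1..<2*m}"
  proof (rule inj_onI)
    fix a b assume ab: "a \<in> {1..<2*m}" "b \<in> {1..<2*m}" "fx a = fx b"
    show "a = b"
    proof (rule ccontr)
      assume "a \<noteq> b"
      then have "\<psi> (a, 0) \<noteq> \<psi> (b, 0)" using psi(2) inV ab by auto
      then show False using ab(3) unfolding fx_def by simp
    qed
  qed
  have injy: "inj_on fy {1..<2*m}"
  proof (rule inj_onI)
    fix a b assume ab: "a \<in> {1..<2*m}" "b \<in> {1..<2*m}" "fy a = fy b"
    show "a = b"
    proof (rule ccontr)
      assume "a \<noteq> b"
      then have "\<psi> (a, 1) \<noteq> \<psi> (b, 1)" using psi(2) inV ab by auto
      then show False using ab(3) unfolding fy_def by simp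
    qed
  qed
  have subx: "fx ` {1..<2*m} \<subseteq> {0..<2*m}"
  proof
    fix x assume "x \<in> fx ` {1..<2*m}"
    then obtain i where i: "i \<in> {1..<2*m}" "x = \<psi> (i, 0)" unfolding fx_def by blast
    have "\<psi> (i, 0) \<in> L0 m (i, 0)" using psi(1) inV i(1) by auto
    then show "x \<in> {0..<2*m}" using i unfolding L0_def by auto
  qed
  have suby: "fy ` {1..<2*m} \<subseteq> {2*m..<4*m}"
  proof
    fix x assume "x \<in> fy ` {1..<2*m}"
    then obtain i where i: "i \<in> {1..<2*m}" "x = \<psi> (i, 1)" unfolding fy_def by blast
    have "\<psi> (i, 1) \<in> L0 m (i, 1)" using psi(1) inV i(1) by auto
    then show "x \<in> {2*m..<4*m}" using i unfolding L0_def by auto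
  qed
  have cx: "card ({0..<2*m} - fx ` {1..<2*m}) = 1"
  proof -
    have "card (fx ` {1..<2*m}) = 2 * m - 1" using card_image[OF injx] by simp
    then show ?thesis using card_Diff_subset[OF _ subx] m1 by simp
  qed
  have cy: "card ({2*m..<4*m} - fy ` {1..<2*m}) = 1"
  proof -
    have "card (fy ` {1..<2*m}) = 2 * m - 1" using card_image[OF injy] by simp
    then show ?thesis using card_Diff_subset[OF _ suby] m1 by simp
  qed
  obtain rx where rx: "{0..<2*m} - fx ` {1..<2*m} = {rx}" using cx card_1_singletonE by blast
  obtain ry where ry: "{2*m..<4*m} - fy ` {1..<2*m} = {ry}" using cy card_1_singletonE by blast
  have rxr: "rx < 2 * m" using rx by auto
  have ryr: "2 * m \<le> ry" "ry < 4 * m" using ry by auto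
  have A: "\<And>j. j < 4 \<Longrightarrow> \<psi> (0, j) = rx \<or> \<psi> (0, j) = ry"
  proof -
    fix j :: nat assume j: "j < 4"
    have w: "\<psi> (0, j) \<in> L0 m (0, j)" using psi(1) inV0 j by auto
    have nx: "\<psi> (0, j) \<notin> fx ` {1..<2*m}"
    proof
      assume "\<psi> (0, j) \<in> fx ` {1..<2*m}"
      then obtain i where i: "i \<in> {1..<2*m}" "\<psi> (0, j) = \<psi> (i, 0)" unfolding fx_def by blast
      have "\<psi> (0, j) \<noteq> \<psi> (i, 0)" using psi(2) inV0[OF j] inV[of i 0] i(1) by auto
      then show False using i(2) by simp
    qed
    have ny: "\<psi> (0, j) \<notin> fy ` {1..<2*m}"
    proof
      assume "\<psi> (0, j) \<in> fy ` {1..<2*m}"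
      then obtain i where i: "i \<in> {1..<2*m}" "\<psi> (0, j) = \<psi> (i, 1)" unfolding fy_def by blast
      have "\<psi> (0, j) \<noteq> \<psi> (i, 1)" using psi(2) inV0[OF j] inV[of i 1] i(1) by auto
      then show False using i(2) by simp
    qed
    have "\<psi> (0, j) < 4 * m" using w unfolding L0_def by (auto split: if_splits)
    show "\<psi> (0, j) = rx \<or> \<psi> (0, j) = ry"
    proof (cases "\<psi> (0, j) < 2 * m")
      case True
      then have "\<psi> (0, j) \<in> {0..<2*m} - fx ` {1..<2*m}" using nx by auto
      then show ?thesis using rx by auto
    next
      case False
      then have "\<psi> (0, j) \<in> {2*m..<4*m} - fy ` {1..<2*m}" using ny \<open>\<psi> (0, j) < 4 * m\<close> by auto
      then show ?thesis using ry by auto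
    qed
  qed
  have w: "\<And>j. j < 4 \<Longrightarrow> \<psi> (0, j) \<in> L0 m (0, j)" using psi(1) inV0 by auto
  show False
  proof (cases "rx < m")
    case True
    show False
    proof (cases "ry < 3 * m")
      case True
      have "\<psi> (0, 3) \<in> L0 m (0, 3)" using w by simp
      then show False using A[of 3] \<open>rx < m\<close> True ryr unfolding L0_def by auto
    next
      case False
      have "\<psi> (0, 2) \<in> L0 m (0, 2)" using w by simp
      then show False using A[of 2] \<open>rx < m\<close> False ryr unfolding L0_def by auto
    qed
  next
    case False
    show False
    proof (cases "ry < 3 * m")
      case True
      have "\<psi> (0, 1) \<in> L0 m (0, 1)" using w by simp
      then show False using A[of 1] \<open>\<not> rx < m\<close> True ryr rxr unfolding L0_def by auto
    next
      case F2: False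
      have "\<psi> (0, 0) \<in> L0 m (0, 0)" using w by simp
      then show False using A[of 0] \<open>\<not> rx < m\<close> F2 ryr rxr unfolding L0_def by auto
    qed
  qed
qed

definition cX :: "nat \<Rightarrow> nat \<Rightarrow> nat" where "cX m js = (if js < 2 then 0 else 2 * m - 1)"
definition cY :: "nat \<Rightarrow> nat \<Rightarrow> nat" where "cY m js = (if even js then 2 * m else 4 * m - 1)"
definition pf :: "nat \<Rightarrow> nat \<Rightarrow> nat \<Rightarrow> nat" where
  "pf m js \<sigma> = (if \<sigma> = cX m js \<or> \<sigma> = cY m js then 0
     else if \<sigma> < 2 * m then (if js < 2 then \<sigma> else \<sigma> + 1)
     else if \<sigma> < 4 * m then (if even js then \<sigma> - 2 * m else \<sigma> - 2 * m + 1)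
     else 2 * m)"

definition cnt :: "nat \<Rightarrow> nat \<Rightarrow> nat \<times> nat \<Rightarrow> nat" where
  "cnt m js v = card {\<sigma>\<in>L0 m v. pf m js \<sigma> = fst v}"

lemma cnt_ge1_if: "\<sigma> \<in> L0 m v \<Longrightarrow> pf m js \<sigma> = fst v \<Longrightarrow> 1 \<le> cnt m js v"
proof -
  assume a: "\<sigma> \<in> L0 m v" "pf m js \<sigma> = fst v"
  have "finite {\<sigma>\<in>L0 m v. pf m js \<sigma> = fst v}" using L0_fin by simp
  moreover have "\<sigma> \<in> {\<sigma>\<in>L0 m v. pf m js \<sigma> = fst v}" using a by simp
  ultimately show ?thesis unfolding cnt_def by (metis One_nat_def Suc_leI card_gt_0_iff empty_iff)
qed

lemma cnt_pair:
  assumes m1: "m \<ge> 1" and k: "k \<le> 2 * m + 1" and v: "v \<in> K422_V k" and f: "fst v \<noteq> 0"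
  shows "1 \<le> cnt m js v"
proof -
  obtain i j where ij: "v = (i, j)" by fastforce
  have i: "1 \<le> i" "i < k" "j < 2" using v f ij by (auto simp: K_mem)
  show ?thesis
  proof (cases "i < 2 * m")
    case True
    show ?thesis
    proof (cases "j = 0")
      case True
      define \<sigma> where "\<sigma> = (if js < 2 then i else i - 1)"
      have "\<sigma> \<in> L0 m v" unfolding \<sigma>_def L0_def using ij i \<open>i < 2 * m\<close> True by auto
      moreover have "pf m js \<sigma> = fst v"
        unfolding \<sigma>_def pf_def cX_def cY_def using ij i \<open>i < 2 * m\<close> True by auto
      ultimately show ?thesis by (rule cnt_ge1_if)
    next
      case False
      then have j1: "j = 1" using i by simp
      define \<sigma> where "\<sigma> = 2 * m + (if even js then i else i - 1)"
      have "\<sigma> \<in> L0 m v" unfolding \<sigma>_def L0_def using ij i \<open>i < 2 * m\<close> j1 by auto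
      moreover have "pf m js \<sigma> = fst v"
        unfolding \<sigma>_def pf_def cX_def cY_def using ij i \<open>i < 2 * m\<close> j1 by auto
      ultimately show ?thesis by (rule cnt_ge1_if)
    qed
  next
    case False
    then have i2: "i = 2 * m" using i k by simp
    define \<sigma> where "\<sigma> = (if j = 0 then 4 * m else 6 * m)"
    have "\<sigma> \<in> L0 m v" unfolding \<sigma>_def L0_def using ij i i2 m1 by auto
    moreover have "pf m js \<sigma> = fst v"
      unfolding \<sigma>_def pf_def cX_def cY_def using ij i i2 m1 by auto
    ultimately show ?thesis by (rule cnt_ge1_if)
  qed
qed

lemma cXY_in:
  assumes m1: "m \<ge> 1"
  shows "cX m js \<in> L0 m (0, j) \<longleftrightarrow> (j < 2 \<longleftrightarrow> js < 2)"
    and "cY m js \<in> L0 m (0, j) \<longleftrightarrow> (even j \<longleftrightarrow> even js)"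
  using m1 unfolding cX_def cY_def L0_def by auto

lemma pf_cXY: "pf m js (cX m js) = 0" "pf m js (cY m js) = 0"
  unfolding pf_def by auto

lemma cX_ne_cY: "m \<ge> 1 \<Longrightarrow> cX m js \<noteq> cY m js"
  unfolding cX_def cY_def by auto

lemma cnt_A:
  assumes m1: "m \<ge> 1"
  shows "card ({cX m js, cY m js} \<inter> L0 m (0, j)) \<le> cnt m js (0, j)"
  unfolding cnt_def using pf_cXY L0_fin by (intro card_mono) auto

lemma cnt_A2:
  assumes m1: "m \<ge> 1"
  shows "2 \<le> cnt m js (0, js)"
proof -
  have "{cX m js, cY m js} \<inter> L0 m (0, js) = {cX m js, cY m js}" using cXY_in[OF m1, of js js] by auto
  then have "card ({cX m js, cY m js} \<inter> L0 m (0, js)) = 2" using cX_ne_cY[OF m1] by simp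
  then show ?thesis using cnt_A[OF m1] by metis
qed

lemma cnt_A1:
  assumes m1: "m \<ge> 1" and j: "j < 4" and js: "js < 4" and ne: "j \<noteq> 3 - js"
  shows "1 \<le> cnt m js (0, j)"
proof -
  have j4: "j = 0 \<or> j = 1 \<or> j = 2 \<or> j = 3" using j by auto
  have js4: "js = 0 \<or> js = 1 \<or> js = 2 \<or> js = 3" using js by auto
  have "(j < 2 \<longleftrightarrow> js < 2) \<or> (even j \<longleftrightarrow> even js)"
    using j4 js4 ne by auto
  then have "cX m js \<in> L0 m (0, j) \<or> cY m js \<in> L0 m (0, j)" using cXY_in[OF m1] by blast
  then show ?thesis
  proof
    assume "cX m js \<in> L0 m (0, j)"
    then show ?thesis using cnt_ge1_if pf_cXY by (metis fst_conv)
  next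
    assume "cY m js \<in> L0 m (0, j)"
    then show ?thesis using cnt_ge1_if pf_cXY by (metis fst_conv)
  qed
qed

lemma L0_hall:
  assumes m1: "m \<ge> 1" and k: "k = 2 * m \<or> k = 2 * m + 1"
  shows "hall_condition (K422_V k) K422_E (L0 m)"
  unfolding hall_condition_def
proof (intro allI impI)
  fix W F assume sg: "is_subgraph W F (K422_V k) K422_E"
  have WV: "W \<subseteq> K422_V k" using sg unfolding is_subgraph_def by blast
  have FE: "\<forall>u v. F u v \<longrightarrow> fst u \<noteq> fst v" using sg unfolding is_subgraph_def K422_E_def by blast
  have finW: "finite W" using WV K_fin finite_subset by blast
  have k2: "k \<le> 2 * m + 1" using k by auto
  define js where "js = (if \<exists>j<4. (0, j) \<in> W then SOME j. j < 4 \<and> (0, j) \<in> W else 0)"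
  have key: "card W \<le> (\<Sum>v\<in>W. cnt m js v)"
  proof (cases "\<exists>j<4. (0, j) \<in> W")
    case True
    have ex: "\<exists>j. j < 4 \<and> (0, j) \<in> W" using True by blast
    have "(SOME j. j < 4 \<and> (0, j) \<in> W) < 4 \<and> (0, SOME j. j < 4 \<and> (0, j) \<in> W) \<in> W"
      using someI_ex[OF ex] .
    then have jsp: "js < 4 \<and> (0, js) \<in> W" unfolding js_def using True by simp
    define a where "a = (0::nat, js)"
    define b where "b = (0::nat, 3 - js)"
    have aW: "a \<in> W" unfolding a_def using jsp by simp
    have "js \<noteq> 3 - js" by presburger
    then have ab: "a \<noteq> b" unfolding a_def b_def by simp
    have other: "\<And>v. v \<in> W \<Longrightarrow> v \<noteq> b \<Longrightarrow> 1 \<le> cnt m js v"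
    proof -
      fix v assume v: "v \<in> W" "v \<noteq> b"
      have vV: "v \<in> K422_V k" using v WV by auto
      show "1 \<le> cnt m js v"
      proof (cases "fst v = 0")
        case False then show ?thesis using cnt_pair[OF m1 k2 vV] by simp
      next
        case True
        obtain j where j: "v = (0, j)" using True by (metis prod.collapse)
        have "j < 4" using vV j by (simp add: K_mem)
        moreover have "j \<noteq> 3 - js" using v(2) j unfolding b_def by auto
        ultimately show ?thesis using cnt_A1[OF m1 _ _] jsp j by blast
      qed
    qed
    have ca: "2 \<le> cnt m js a" unfolding a_def using cnt_A2[OF m1] .
    have s1: "(\<Sum>v\<in>W. cnt m js v) = cnt m js a + (\<Sum>v\<in>W - {a}. cnt m js v)"
      using finW aW by (simp add: sum.remove)
    have s2: "card (W - {a, b}) \<le> (\<Sum>v\<in>W - {a, b}. cnt m js v)"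
    proof -
      have "(\<Sum>v\<in>W - {a, b}. 1) \<le> (\<Sum>v\<in>W - {a, b}. cnt m js v)"
        using other by (intro sum_mono) auto
      then show ?thesis by simp
    qed
    have cWab: "card W \<le> card (W - {a, b}) + 2"
    proof -
      have "W \<subseteq> (W - {a, b}) \<union> {a, b}" by auto
      then have "card W \<le> card ((W - {a, b}) \<union> {a, b})" using finW by (intro card_mono) auto
      also have "\<dots> \<le> card (W - {a, b}) + card {a, b}" by (rule card_Un_le)
      also have "card {a, b} = 2" using ab by simp
      finally show ?thesis .
    qed
    show ?thesis
    proof (cases "b \<in> W")
      case True
      have "(\<Sum>v\<in>W - {a}. cnt m js v) = cnt m js b + (\<Sum>v\<in>W - {a} - {b}. cnt m js v)"
        using finW True ab by (intro sum.remove) auto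
      moreover have "W - {a} - {b} = W - {a, b}" by auto
      ultimately have "(\<Sum>v\<in>W - {a}. cnt m js v) \<ge> card (W - {a, b})" using s2 by simp
      then show ?thesis using s1 ca cWab by linarith
    next
      case False
      have "W - {a} = W - {a, b}" using False by auto
      then have "(\<Sum>v\<in>W - {a}. cnt m js v) \<ge> card (W - {a, b})" using s2 by simp
      moreover have "card W \<le> card (W - {a, b}) + 1"
      proof -
        have "card W > 0" using finW aW card_gt_0_iff by blast
        then have "card W = card (W - {a}) + 1" using finW aW by (simp add: card_Diff_singleton)
        then show ?thesis using \<open>W - {a} = W - {a, b}\<close> by simp
      qed
      ultimately show ?thesis using s1 ca by linarith
    qed
  next
    case False
    have "\<forall>v\<in>W. 1 \<le> cnt m js v"
    proof
      fix v assume v: "v \<in> W"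
      have vV: "v \<in> K422_V k" using v WV by auto
      have "fst v \<noteq> 0"
      proof
        assume f0: "fst v = 0"
        obtain j where j: "v = (0, j)" using f0 by (metis prod.collapse)
        have "j < 4" using vV j by (simp add: K_mem)
        then show False using False v j by blast
      qed
      then show "1 \<le> cnt m js v" using cnt_pair[OF m1 k2 vV] by simp
    qed
    then have "(\<Sum>v\<in>W. 1) \<le> (\<Sum>v\<in>W. cnt m js v)" by (intro sum_mono) auto
    then show ?thesis by simp
  qed
  have "(\<Sum>v\<in>W. cnt m js v) \<le> (\<Sum>\<sigma>\<in>\<Union> (L0 m ` W). indep_number {v\<in>W. \<sigma> \<in> L0 m v} F)"
    unfolding cnt_def by (rule charge[OF finW _ FE]) (simp add: L0_fin)
  then show "card W \<le> (\<Sum>\<sigma>\<in>\<Union> (L0 m ` W). indep_number {v\<in>W. \<sigma> \<in> L0 m v} F)"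
    using key by linarith
qed

theorem theorem4:
  fixes k :: nat
  assumes "2 \<le> k"
  shows "hall_number (K422_V k) K422_E = (if odd k then k else k + 1)"
proof -
  define m where "m = k div 2"
  have m1: "m \<ge> 1" unfolding m_def using assms by simp
  have km: "k = 2 * m \<or> k = 2 * m + 1" unfolding m_def by presburger
  define P where "P = (\<lambda>j. \<forall>L :: nat \<times> nat \<Rightarrow> nat set.
      (\<forall>v\<in>K422_V k. finite (L v) \<and> j \<le> card (L v)) \<and> hall_condition (K422_V k) K422_E L
      \<longrightarrow> (\<exists>\<psi>. proper_L_coloring (K422_V k) K422_E L \<psi>))"
  have up: "P (2 * m + 1)"
    unfolding P_def
  proof (intro allI impI)
    fix L :: "nat \<times> nat \<Rightarrow> nat set"
    assume a: "(\<forall>v\<in>K422_V k. finite (L v) \<and> 2 * m + 1 \<le> card (L v)) \<and> hall_condition (K422_V k) K422_E L"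
    have "colorable (K422_V k) fst L"
    proof (cases "odd k")
      case True
      then have "k = 2 * m + 1" using km by auto
      then have "\<forall>v\<in>K422_V k. finite (L v) \<and> k \<le> card (L v)" using a by simp
      then show ?thesis using upper_odd[OF True assms] by blast
    next
      case False
      then have "k = 2 * m" using km by auto
      then have "\<forall>v\<in>K422_V k. finite (L v) \<and> k + 1 \<le> card (L v)" using a by simp
      then show ?thesis using upper_even[OF assms] by blast
    qed
    then show "\<exists>\<psi>. proper_L_coloring (K422_V k) K422_E L \<psi>" using proper_iff by blast
  qed
  have low: "\<And>j. j \<le> 2 * m \<Longrightarrow> \<not> P j"
  proof
    fix j assume j: "j \<le> 2 * m" and Pj: "P j"
    have "(\<forall>v\<in>K422_V k. finite (L0 m v) \<and> j \<le> card (L0 m v)) \<and> hall_condition (K422_V k) K422_E (L0 m)"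
      using j L0_fin L0_card L0_hall[OF m1 km] by simp
    then have "\<exists>\<psi>. proper_L_coloring (K422_V k) K422_E (L0 m) \<psi>" using Pj unfolding P_def by blast
    then have "colorable (K422_V k) fst (L0 m)" using proper_iff by blast
    then show False using L0_noncol[OF m1 km] by blast
  qed
  have "hall_number (K422_V k) K422_E = (LEAST j. 0 < j \<and> P j)"
    unfolding hall_number_def P_def by simp
  also have "\<dots> = 2 * m + 1"
  proof (rule Least_equality)
    show "0 < 2 * m + 1 \<and> P (2 * m + 1)" using up by simp
    fix y assume "0 < y \<and> P y"
    then have "P y" by blast
    show "2 * m + 1 \<le> y"
    proof (rule ccontr)
      assume "\<not> 2 * m + 1 \<le> y"
      then have "y \<le> 2 * m" by simp
      then show False using low \<open>P y\<close> by blast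
    qed
  qed
  also have "\<dots> = (if odd k then k else k + 1)" using km by auto
  finally show ?thesis .
qed

end
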